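(* Let $\mathbb F_q$ be a finite field with $q$ elements, let $n\ge 2$, let $a_1,\dots,a_n,b\in\mathbb F_q^*$, and let $m_1,\dots,m_n,k,k_1,\dots,k_n$ be positive integers. Put $M=\operatorname{lcm}[m_1,\dots,m_n]$ and $d_j=\gcd(m_j,q-1)$ for $j=1,\dots,n$. Let $0\le t\le n$ and assume (after indexing) that $d_1,\dots,d_t$ are odd, $d_{t+1},\dots,d_n$ are even, and $d_1,\dots,d_t,d_{t+1}/2,\dots,d_n/2$ are pairwise coprime. Assume also that $$\gcd\Bigl(\sum_{j=1}^n \frac{k_jM}{m_j}-kM,\;q-1\Bigr)=1.$$ Then the number of $(x_1,\dots,x_n)\in\mathbb F_q^n$ satisfying $(a_1x_1^{m_1}+\dots+a_nx_n^{m_n})^k=bx_1^{k_1}\cdots x_n^{k_n}$ equals $$q^{n-1}+(-1)^{n-1}+(-1)^{n-1}\sum_{j=1}^{\lfloor (n-t)/2\rfloor}\eta((-1)^j)\,\sigma_{2j}\bigl(\eta(a_{t+1}),\dots,\eta(a_n)\bigr)\,q^j+E,$$ where $E=\eta((-1)^{n/2}a_1\cdots a_n)\,q^{(n-2)/2}(q-1)$ if $t=0$ and $n$ is even, and $E=0$ otherwise.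
   Context: $\sigma_{2j}(z_1,\dots,z_{n-t})$ denotes the elementary symmetric polynomial of degree $2j$ in $n-t$ variables. $\eta$ is the quadratic character on $\mathbb F_q$: $\eta(x)=+1,-1,0$ according as $x$ is a nonzero square, a non-square, or zero in $\mathbb F_q$. (If $q$ is even then every $d_j$ is odd, so $t=n$ and all terms involving $\eta$ are absent.) $\mathbb F_q^*=\mathbb F_q\setminus\{0\}$. *)

theory Defs
  imports Main "HOL-Library.FuncSet"
begin

definition quad_char :: "'a::field \<Rightarrow> int" where
  "quad_char x = (if x = 0 then 0 else if (\<exists>y. y ^ 2 = x) then 1 else -1)"

definition esym :: "nat set \<Rightarrow> (nat \<Rightarrow> int) \<Rightarrow> nat \<Rightarrow> int" where
  "esym S f r = (\<Sum>T \<in> {T. T \<subseteq> S \<and> card T = r}. \<Prod>i\<in>T. f i)"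

end

theory Submission
  imports Defs "HOL-Number_Theory.Number_Theory" "HOL-Algebra.Multiplicative_Group"
begin

lemma count_cong:
  fixes P N x :: nat
  assumes "0 < P" "P dvd N"
  shows "card {s\<in>{..<N}. [s = x] (mod P)} = N div P"
proof -
  obtain K where N: "N = P * K" using assms by (auto elim: dvdE)
  have "{s\<in>{..<N}. [s = x] (mod P)} = (\<lambda>k. x mod P + P * k) ` {..<K}"
  proof (intro equalityI subsetI)
    fix s assume s: "s \<in> {s\<in>{..<N}. [s = x] (mod P)}"
    then have "s mod P = x mod P" "s < P * K" by (auto simp: cong_def N)
    moreover have "s div P < K" using \<open>s < P*K\<close> assms(1)
      by (simp add: div_less_iff_less_mult mult.commute)
    ultimately show "s \<in> (\<lambda>k. x mod P + P * k) ` {..<K}"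
      by (intro image_eqI[of _ _ "s div P"]) (auto, metis mod_div_mult_eq mult.commute)
  next
    fix s assume "s \<in> (\<lambda>k. x mod P + P * k) ` {..<K}"
    then obtain k where k: "k < K" "s = x mod P + P * k" by auto
    have "x mod P < P" using assms by simp
    then have "x mod P + P * k < P + P * k" by simp
    also have "\<dots> = P * (k + 1)" by simp
    also have "\<dots> \<le> P * K" using k by (intro mult_le_mono2) simp
    finally have "s < N" using k N by simp
    moreover have "[s = x] (mod P)" using k by (simp add: cong_def)
    ultimately show "s \<in> {s\<in>{..<N}. [s = x] (mod P)}" by simp
  qed
  also have "card \<dots> = K"
    using assms(1) by (subst card_image) (auto simp: inj_on_def)
  finally show ?thesis using N assms by simp
qed

lemma prod_dvd_coprime:
  fixes m :: "'b \<Rightarrow> nat"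
  assumes "finite S" "\<forall>i\<in>S. \<forall>j\<in>S. i \<noteq> j \<longrightarrow> coprime (m i) (m j)" "\<forall>j\<in>S. m j dvd N"
  shows "(\<Prod>j\<in>S. m j) dvd N"
  using assms
proof (induction S rule: finite_induct)
  case (insert i S)
  have "coprime (m i) (\<Prod>j\<in>S. m j)"
    using insert by (intro prod_coprime_right) auto
  then show ?case using insert by (simp add: divides_mult)
qed simp

lemma crt_count:
  fixes m u :: "'b \<Rightarrow> nat"
  assumes fin: "finite S" and pos: "\<forall>j\<in>S. 0 < m j"
    and cop: "\<forall>i\<in>S. \<forall>j\<in>S. i \<noteq> j \<longrightarrow> coprime (m i) (m j)"
    and dv: "\<forall>j\<in>S. m j dvd N"
  shows "card {s\<in>{..<N}. \<forall>j\<in>S. [s = u j] (mod m j)} = N div (\<Prod>j\<in>S. m j)"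
proof -
  obtain x where x: "\<forall>j\<in>S. [x = u j] (mod m j)"
    using chinese_remainder_nat[OF fin cop] by blast
  have "{s\<in>{..<N}. \<forall>j\<in>S. [s = u j] (mod m j)} = {s\<in>{..<N}. [s = x] (mod (\<Prod>j\<in>S. m j))}"
  proof (intro Collect_cong conj_cong refl iffI)
    fix s assume "\<forall>j\<in>S. [s = u j] (mod m j)"
    then have "\<forall>j\<in>S. [s = x] (mod m j)" using x by (metis cong_sym cong_trans)
    then show "[s = x] (mod (\<Prod>j\<in>S. m j))"
      using cop by (intro coprime_cong_prod_nat) auto
  next
    fix s assume h: "[s = x] (mod (\<Prod>j\<in>S. m j))"
    show "\<forall>j\<in>S. [s = u j] (mod m j)"
    proof
      fix j assume "j \<in> S"
      then have "m j dvd (\<Prod>j\<in>S. m j)" using fin by (simp add: dvd_prodI)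
      then have "[s = x] (mod m j)" using h cong_dvd_modulus_nat by blast
      then show "[s = u j] (mod m j)" using x \<open>j\<in>S\<close> cong_trans by blast
    qed
  qed
  also have "card \<dots> = N div (\<Prod>j\<in>S. m j)"
    by (rule count_cong) (use pos fin in simp, rule prod_dvd_coprime[OF fin cop dv])
  finally show ?thesis .
qed

lemma comb_even_subsets:
  fixes x :: "'b \<Rightarrow> int"
  assumes fin: "finite E"
  shows "2 * (\<Sum>V\<in>{V. V \<subseteq> E \<and> even (card V)}. \<Prod>j\<in>V. x j)
         = (\<Prod>j\<in>E. x j + 1) + (\<Prod>j\<in>E. - x j + 1)"
proof -
  have a: "(\<Prod>j\<in>E. x j + 1) = (\<Sum>V\<in>Pow E. \<Prod>j\<in>V. x j)"
    by (subst prod_add[OF fin]) simp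
  have b: "(\<Prod>j\<in>E. - x j + 1) = (\<Sum>V\<in>Pow E. (-1)^card V * (\<Prod>j\<in>V. x j))"
    by (subst prod_add[OF fin]) (simp add: prod_uminus)
  have "(\<Prod>j\<in>E. x j + 1) + (\<Prod>j\<in>E. - x j + 1)
      = (\<Sum>V\<in>Pow E. (1 + (-1)^card V) * (\<Prod>j\<in>V. x j))"
    unfolding a b sum.distrib[symmetric] by (rule sum.cong) (auto simp: algebra_simps)
  also have "\<dots> = (\<Sum>V\<in>{V\<in>Pow E. even (card V)}. (1 + (-1)^card V) * (\<Prod>j\<in>V. x j))"
    using fin by (intro sum.mono_neutral_right) auto
  also have "\<dots> = (\<Sum>V\<in>{V. V \<subseteq> E \<and> even (card V)}. 2 * (\<Prod>j\<in>V. x j))"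
    by (rule sum.cong) auto
  finally show ?thesis by (simp add: sum_distrib_left)
qed

lemma prod_pm1:
  fixes x :: "'b \<Rightarrow> int"
  assumes "finite E" "\<forall>j\<in>E. x j = 1 \<or> x j = -1"
  shows "(\<Prod>j\<in>E. x j + 1) = (if \<forall>j\<in>E. x j = 1 then 2 ^ card E else 0)"
  using assms by (induction E rule: finite_induct) auto


definition ee :: "('b \<Rightarrow> nat) \<Rightarrow> 'b \<Rightarrow> nat" where
  "ee d j = (if even (d j) then d j div 2 else d j)"

lemma prod_if_zero:
  assumes "finite S"
  shows "(\<Prod>j\<in>S. if P j then f j else (0::'c::comm_semiring_1)) = (if \<forall>j\<in>S. P j then (\<Prod>j\<in>S. f j) else 0)"
proof (cases "\<forall>j\<in>S. P j")
  case True then show ?thesis by (simp cong: prod.cong)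
next
  case False
  then obtain j where "j \<in> S" "\<not> P j" by blast
  then have "(\<Prod>j\<in>S. if P j then f j else (0::'c)) = 0" using assms by (intro prod_zero) auto
  then show ?thesis using False by auto
qed

lemma sum_if_const:
  assumes "finite A"
  shows "(\<Sum>s\<in>A. if P s then c else (0::'c::comm_semiring_1)) = of_nat (card {s\<in>A. P s}) * c"
  using assms by (simp add: sum.inter_filter[symmetric])

lemma cong2_iff: "[a = b] (mod 2) \<longleftrightarrow> (even a = even b)" for a b :: nat
  unfolding cong_def by (metis even_iff_mod_2_eq_zero odd_iff_mod_2_eq_one)

lemma crt_main:
  fixes d u :: "'b \<Rightarrow> nat" and N :: nat
  assumes fin: "finite S" and N: "0 < N" and dpos: "\<forall>j\<in>S. 0 < d j \<and> d j dvd N"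
    and cop: "\<forall>i\<in>S. \<forall>j\<in>S. i \<noteq> j \<longrightarrow> coprime (ee d i) (ee d j)"
  shows "(\<Sum>s<N. \<Prod>j\<in>S. (if [s = u j] (mod d j) then int (d j) else 0))
       = int N * (\<Sum>V\<in>{V. V \<subseteq> {j\<in>S. even (d j)} \<and> even (card V)}. \<Prod>j\<in>V. (-1::int)^(u j))"
proof -
  define E where "E = {j\<in>S. even (d j)}"
  have finE: "finite E" using fin by (simp add: E_def)
  have "(\<Sum>s<N. \<Prod>j\<in>S. (if [s = u j] (mod d j) then int (d j) else 0))
      = (\<Sum>s<N. if \<forall>j\<in>S. [s = u j] (mod d j) then (\<Prod>j\<in>S. int (d j)) else 0)"
    using fin by (simp add: prod_if_zero)
  also have "\<dots> = int (card {s\<in>{..<N}. \<forall>j\<in>S. [s = u j] (mod d j)}) * (\<Prod>j\<in>S. int (d j))"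
    by (simp add: sum_if_const)
  finally have L: "(\<Sum>s<N. \<Prod>j\<in>S. (if [s = u j] (mod d j) then int (d j) else 0))
      = int (card {s\<in>{..<N}. \<forall>j\<in>S. [s = u j] (mod d j)}) * (\<Prod>j\<in>S. int (d j))" .
  show ?thesis
  proof (cases "E = {}")
    case True
    then have odd: "\<forall>j\<in>S. odd (d j)" by (auto simp: E_def)
    then have cop': "\<forall>i\<in>S. \<forall>j\<in>S. i \<noteq> j \<longrightarrow> coprime (d i) (d j)"
      using cop by (auto simp: ee_def)
    have dv: "(\<Prod>j\<in>S. d j) dvd N" using prod_dvd_coprime[OF fin cop'] dpos by blast
    have c: "card {s\<in>{..<N}. \<forall>j\<in>S. [s = u j] (mod d j)} = N div (\<Prod>j\<in>S. d j)"
      using crt_count[OF fin _ cop'] dpos by blast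
    have "int (N div (\<Prod>j\<in>S. d j)) * (\<Prod>j\<in>S. int (d j)) = int N"
      using dv by (simp add: of_nat_prod[symmetric] of_nat_mult[symmetric] del: of_nat_prod)
    moreover have "{V. V \<subseteq> {j\<in>S. even (d j)} \<and> even (card V)} = {{}}"
      using True by (auto simp: E_def)
    ultimately show ?thesis using L c by simp
  next
    case False
    have "\<exists>j0\<in>E. \<forall>j\<in>E-{j0}. odd (ee d j)"
    proof (cases "\<exists>j\<in>E. even (ee d j)")
      case True
      then obtain j0 where j0: "j0 \<in> E" "even (ee d j0)" by blast
      have "\<forall>j\<in>E-{j0}. odd (ee d j)"
      proof (intro ballI notI)
        fix j assume j: "j \<in> E - {j0}" "even (ee d j)"
        then have "coprime (ee d j0) (ee d j)" using cop j0 by (auto simp: E_def)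
        then show False using j j0 by auto
      qed
      then show ?thesis using j0 by blast
    next
      case F2: False
      then show ?thesis using \<open>E \<noteq> {}\<close> by blast
    qed
    then obtain j0 where j0: "j0 \<in> E" "\<forall>j\<in>E-{j0}. odd (ee d j)" by blast
    define m where "m j = (if j = j0 then d j else ee d j)" for j
    have j0S: "j0 \<in> S" "even (d j0)" using j0 by (auto simp: E_def)
    have h2: "0 < d j div 2" if "0 < d j" "even (d j)" for j using that by (auto elim: evenE)
    have mpos: "\<forall>j\<in>S. 0 < m j" using dpos h2 by (auto simp: m_def ee_def)
    have mdvd: "\<forall>j\<in>S. m j dvd d j" by (auto simp: m_def ee_def)
    have mdvdN: "\<forall>j\<in>S. m j dvd N" using mdvd dpos dvd_trans by blast
    have copm: "\<forall>i\<in>S. \<forall>j\<in>S. i \<noteq> j \<longrightarrow> coprime (m i) (m j)"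
    proof (intro ballI impI)
      fix i j assume ij: "i \<in> S" "j \<in> S" "i \<noteq> j"
      have oddo: "odd (ee d k)" if "k \<in> S" "k \<noteq> j0" for k
      proof (cases "k \<in> E")
        case True then show ?thesis using j0 that by auto
      next
        case False then show ?thesis using that by (auto simp: E_def ee_def)
      qed
      have c: "coprime (ee d i) (ee d j)" using cop ij by blast
      have d0: "d j0 = 2 * ee d j0" using j0S by (simp add: ee_def)
      show "coprime (m i) (m j)"
      proof (cases "i = j0")
        case True
        then have "coprime 2 (ee d j)" using oddo ij by auto
        then show ?thesis using True c ij d0 by (simp add: m_def)
      next
        case F: False
        show ?thesis
        proof (cases "j = j0")
          case True
          then have "coprime (ee d i) 2" using oddo ij F by auto
          then show ?thesis using True c ij d0 F by (simp add: m_def)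
        next
          case False
          then show ?thesis using F c by (simp add: m_def)
        qed
      qed
    qed
    have d2: "d j = 2 * m j" if "j \<in> E - {j0}" for j
      using that by (auto simp: m_def ee_def E_def)
    have dm: "d j = m j" if "j \<in> S" "j \<notin> E - {j0}" for j
      using that by (auto simp: m_def ee_def E_def)
    have equiv: "(\<forall>j\<in>S. [s = u j] (mod d j)) \<longleftrightarrow>
        ((\<forall>j\<in>E. even (u j) = even (u j0)) \<and> (\<forall>j\<in>S. [s = u j] (mod m j)))" for s
    proof
      assume h: "\<forall>j\<in>S. [s = u j] (mod d j)"
      have par: "even s = even (u j)" if "j \<in> E" for j
      proof -
        have "[s = u j] (mod 2)" using h that cong_dvd_modulus_nat by (auto simp: E_def)
        then show ?thesis by (simp add: cong2_iff)
      qed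
      show "(\<forall>j\<in>E. even (u j) = even (u j0)) \<and> (\<forall>j\<in>S. [s = u j] (mod m j))"
      proof (intro conjI ballI)
        fix j assume "j \<in> E" then show "even (u j) = even (u j0)" using par j0(1) by metis
      next
        fix j assume "j \<in> S" then show "[s = u j] (mod m j)"
          using h mdvd cong_dvd_modulus_nat by metis
      qed
    next
      assume h: "(\<forall>j\<in>E. even (u j) = even (u j0)) \<and> (\<forall>j\<in>S. [s = u j] (mod m j))"
      show "\<forall>j\<in>S. [s = u j] (mod d j)"
      proof
        fix j assume jS: "j \<in> S"
        show "[s = u j] (mod d j)"
        proof (cases "j \<in> E - {j0}")
          case True
          have "[s = u j0] (mod 2)" using h j0S cong_dvd_modulus_nat
            by (metis dvd_refl m_def even_iff_mod_2_eq_zero dvd_imp_mod_0 cong_dvd_modulus_nat)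
          then have "even s = even (u j0)" by (simp add: cong2_iff)
          then have "even s = even (u j)" using h True by auto
          then have s2: "[s = u j] (mod 2)" by (simp add: cong2_iff)
          have "coprime 2 (m j)" using j0 True by (auto simp: m_def)
          then have "[s = u j] (mod 2 * m j)" using s2 h jS coprime_cong_mult_nat by blast
          then show ?thesis using d2[OF True] by simp
        next
          case False then show ?thesis using dm[OF jS False] h jS by simp
        qed
      qed
    qed
    define same where "same = (\<forall>j\<in>E. even (u j) = even (u j0))"
    have dvm: "(\<Prod>j\<in>S. m j) dvd N" by (rule prod_dvd_coprime[OF fin copm mdvdN])
    have cnt: "card {s\<in>{..<N}. \<forall>j\<in>S. [s = u j] (mod d j)} = (if same then N div (\<Prod>j\<in>S. m j) else 0)"
    proof (cases same)
      case True
      then have "{s\<in>{..<N}. \<forall>j\<in>S. [s = u j] (mod d j)} = {s\<in>{..<N}. \<forall>j\<in>S. [s = u j] (mod m j)}"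
        using equiv by (auto simp: same_def)
      then show ?thesis using crt_count[OF fin mpos copm mdvdN] True by simp
    next
      case False
      then have "{s\<in>{..<N}. \<forall>j\<in>S. [s = u j] (mod d j)} = {}"
        using equiv by (auto simp: same_def)
      then show ?thesis using False by auto
    qed
    have ES: "E \<subseteq> S" by (auto simp: E_def)
    have pd: "(\<Prod>j\<in>S. int (d j)) = 2 ^ card (E - {j0}) * (\<Prod>j\<in>S. int (m j))"
    proof -
      have "(\<Prod>j\<in>S. int (d j)) = (\<Prod>j\<in>S. (if j \<in> E - {j0} then 2 else 1) * int (m j))"
        by (rule prod.cong) (auto simp: d2 dm)
      also have "\<dots> = (\<Prod>j\<in>S. (if j \<in> E - {j0} then 2 else 1)) * (\<Prod>j\<in>S. int (m j))"
        by (simp add: prod.distrib)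
      also have "(\<Prod>j\<in>S. (if j \<in> E - {j0} then 2 else 1)) = (\<Prod>j\<in>E-{j0}. (2::int))"
      proof -
        have "(\<Prod>j\<in>S. (if j \<in> E - {j0} then 2 else 1)) = (\<Prod>j\<in>E-{j0}. (if j \<in> E - {j0} then 2 else (1::int)))"
          using fin ES by (intro prod.mono_neutral_right) auto
        then show ?thesis by simp
      qed
      finally show ?thesis by simp
    qed
    have LHS: "int (card {s\<in>{..<N}. \<forall>j\<in>S. [s = u j] (mod d j)}) * (\<Prod>j\<in>S. int (d j))
        = (if same then 2 ^ (card E - 1) * int N else 0)"
    proof -
      have "int (N div (\<Prod>j\<in>S. m j)) * (\<Prod>j\<in>S. int (m j)) = int N"
        using dvm by (simp add: of_nat_prod[symmetric] of_nat_mult[symmetric] del: of_nat_prod)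
      then show ?thesis using cnt pd j0 finE by (auto simp: card_Diff_singleton)
    qed
    define x where "x j = (-1::int)^(u j)" for j
    have xx: "x j = 1 \<or> x j = -1" for j by (cases "even (u j)") (auto simp: x_def)
    have xpm: "\<forall>j\<in>E. x j = 1 \<or> x j = -1" using xx by auto
    have xpm': "\<forall>j\<in>E. - x j = 1 \<or> - x j = -1" using xx by auto
    have p1: "(\<Prod>j\<in>E. x j + 1) = (if \<forall>j\<in>E. x j = 1 then 2 ^ card E else 0)"
      by (rule prod_pm1[OF finE xpm])
    have p2: "(\<Prod>j\<in>E. - x j + 1) = (if \<forall>j\<in>E. - x j = 1 then 2 ^ card E else 0)"
      by (rule prod_pm1[OF finE xpm'])
    have sameiff: "same \<longleftrightarrow> (\<forall>j\<in>E. x j = 1) \<or> (\<forall>j\<in>E. - x j = 1)"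
    proof -
      have xe: "x j = 1 \<longleftrightarrow> even (u j)" "- x j = 1 \<longleftrightarrow> odd (u j)" for j
        by (cases "even (u j)"; simp add: x_def)+
      show ?thesis unfolding same_def xe using j0(1) by blast
    qed
    have excl: "\<not> ((\<forall>j\<in>E. x j = 1) \<and> (\<forall>j\<in>E. - x j = 1))" using j0 by auto
    have "2 * (\<Sum>V\<in>{V. V \<subseteq> E \<and> even (card V)}. \<Prod>j\<in>V. x j) = (if same then 2 ^ card E else 0)"
      unfolding comb_even_subsets[OF finE] p1 p2 using sameiff excl by auto
    moreover have "card E \<ge> 1" using False finE by (simp add: Suc_leI card_gt_0_iff)
    ultimately have "(\<Sum>V\<in>{V. V \<subseteq> E \<and> even (card V)}. \<Prod>j\<in>V. x j) = (if same then 2 ^ (card E - 1) else 0)"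
      by (cases "card E") auto
    then show ?thesis using L LHS by (simp add: x_def E_def)
  qed
qed


lemma L1:
  fixes N :: nat and m A B :: int
  assumes N: "0 < N"
  shows "card {i\<in>{..<N}. [m * int i + A = B] (mod int N)}
       = (if [A = B] (mod gcd m (int N)) then nat (gcd m (int N)) else 0)"
proof -
  define d where "d = gcd m (int N)"
  have dpos: "d > 0" using N by (simp add: d_def)
  obtain m' where m': "m = d * m'" unfolding d_def by (meson gcd_dvd1 dvdE)
  obtain N' where N': "int N = d * N'" unfolding d_def by (meson gcd_dvd2 dvdE)
  have N'pos: "N' > 0" using N' dpos N by (metis of_nat_0_less_iff zero_less_mult_pos)
  have cop: "coprime m' N'"
  proof -
    have "gcd m (int N) = d * gcd m' N'" using m' N' dpos by (simp add: gcd_mult_left)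
    then have "gcd m' N' = 1" using dpos d_def N by auto
    then show ?thesis by (simp add: coprime_iff_gcd_eq_1)
  qed
  show ?thesis
  proof (cases "[A = B] (mod d)")
    case False
    have "{i\<in>{..<N}. [m * int i + A = B] (mod int N)} = {}"
    proof (intro equalityI subsetI)
      fix i assume "i \<in> {i\<in>{..<N}. [m * int i + A = B] (mod int N)}"
      then have "[m * int i + A = B] (mod d)" using N' by (auto intro: cong_dvd_modulus)
      moreover have "[m * int i + A = A] (mod d)" using m' by (simp add: cong_def mult.assoc)
      ultimately have "[A = B] (mod d)" by (meson cong_sym cong_trans)
      then show "i \<in> {}" using False by simp
    qed simp
    then show ?thesis using False by (simp add: d_def)
  next
    case True
    then have "d dvd B - A" using cong_sym cong_iff_dvd_diff by blast
    then obtain c where c: "B - A = d * c" by (elim dvdE)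
    obtain w where w: "[m' * w = 1] (mod N')" using cong_solve_coprime_int[OF cop] by blast
    define r where "r = nat ((w * c) mod N')"
    have N'nat: "int (nat N') = N'" using N'pos by simp
    have eq: "[m * int i + A = B] (mod int N) \<longleftrightarrow> [i = r] (mod nat N')" for i
    proof -
      have "[m * int i + A = B] (mod int N) \<longleftrightarrow> d * N' dvd d * (m' * int i - c)"
      proof -
        have "m * int i + A - B = d * (m' * int i - c)"
          using m' c by (simp add: algebra_simps)
        then show ?thesis unfolding cong_iff_dvd_diff N' by simp
      qed
      also have "\<dots> \<longleftrightarrow> [m' * int i = c] (mod N')" using dpos
        by (simp add: cong_iff_dvd_diff)
      also have "\<dots> \<longleftrightarrow> [int i = w * c] (mod N')"
      proof
        assume h: "[m' * int i = c] (mod N')"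
        have "[w * (m' * int i) = w * c] (mod N')" using h by (rule cong_scalar_left)
        moreover have "[w * (m' * int i) = int i] (mod N')"
          using cong_scalar_right[OF w, of "int i"] by (simp add: ac_simps)
        ultimately show "[int i = w * c] (mod N')" by (meson cong_sym cong_trans)
      next
        assume h: "[int i = w * c] (mod N')"
        have "[m' * int i = m' * (w * c)] (mod N')" using h by (rule cong_scalar_left)
        moreover have "[m' * (w * c) = c] (mod N')"
          using cong_scalar_right[OF w, of c] by (simp add: ac_simps)
        ultimately show "[m' * int i = c] (mod N')" by (meson cong_trans)
      qed
      also have "\<dots> \<longleftrightarrow> [int i = int r] (mod N')"
        using N'pos by (simp add: r_def cong_def)
      also have "\<dots> \<longleftrightarrow> [i = r] (mod nat N')"
        using cong_int_iff[of i r "nat N'"] N'nat by simp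
      finally show ?thesis .
    qed
    have "card {i\<in>{..<N}. [m * int i + A = B] (mod int N)} = card {i\<in>{..<N}. [i = r] (mod nat N')}"
      using eq by simp
    also have "\<dots> = N div nat N'"
    proof (rule count_cong)
      show "0 < nat N'" using N'pos by simp
      show "nat N' dvd N" using N' dpos N'pos
        by (metis dvd_triv_right int_dvd_int_iff N'nat mult.commute)
    qed
    also have "\<dots> = nat d"
    proof -
      have "int N = d * int (nat N')" using N' N'nat by simp
      then have "N = nat d * nat N'" using dpos N'pos by (metis nat_int nat_mult_distrib less_le N'nat)
      then show ?thesis using N'pos by simp
    qed
    finally show ?thesis using True by (simp add: d_def)
  qed
qed


definition tring :: "'a::field ring" where
 "tring = \<lparr>carrier = UNIV, mult = (*), one = 1, zero = 0, add = (+)\<rparr>"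

lemma tring_field: "field (tring :: 'a::field ring)"
proof -
  have cr: "cring (tring :: 'a ring)" unfolding tring_def
  proof (rule cringI)
    show "abelian_group \<lparr>carrier = UNIV::'a set, mult = (*), one = 1, zero = 0::'a, add = (+)\<rparr>"
      by (rule abelian_groupI) (auto intro: left_minus)
    show "Group.comm_monoid \<lparr>carrier = UNIV::'a set, mult = (*), one = 1, zero = 0::'a, add = (+)\<rparr>"
      apply (rule comm_monoidI) apply (simp_all add: mult.assoc mult.commute) done
  qed (auto simp: distrib_right)
  show ?thesis
  proof (rule field.intro)
    show "domain (tring::'a ring)" 
      apply (rule domain.intro[OF cr]) apply (rule domain_axioms.intro) apply (auto simp: tring_def) done
    show "field_axioms (tring::'a ring)"
      unfolding field_axioms_def Units_def tring_def
      by auto (metis field_class.field_inverse mult.commute)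
  qed
qed

lemma gen_exists:
  "\<exists>g::'a::{finite,field}. g \<noteq> 0 \<and> (\<forall>x. x \<noteq> 0 \<longrightarrow> (\<exists>i::nat. x = g ^ i))"
proof -
  interpret field "tring :: 'a ring" by (rule tring_field)
  have "finite (carrier (tring :: 'a ring))" by simp
  note h = finite_field_mult_group_has_gen[OF this]
  then obtain a where
    a: "a \<in> carrier tring - {\<zero>\<^bsub>tring\<^esub>}" "carrier (tring::'a ring) - {\<zero>\<^bsub>tring\<^esub>} = {a[^]\<^bsub>tring\<^esub>i | i::nat . i \<in> UNIV}" unfolding mult_of_simps by blast
  have pw: "a [^]\<^bsub>tring\<^esub> (i::nat) = a ^ i" for i by (induct i) (simp_all add: tring_def)
  have c: "carrier (tring::'a ring) = UNIV" "\<zero>\<^bsub>tring::'a ring\<^esub> = 0" by (simp_all add: tring_def)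
  show ?thesis using a unfolding c pw by (intro exI[of _ a]) auto
qed

locale ffg =
  fixes g :: "'a::{finite,field}"
  assumes g_nz: "g \<noteq> 0" and gen: "\<And>x. x \<noteq> 0 \<Longrightarrow> \<exists>i. x = g ^ i"
begin


lemma q_ge2: "2 \<le> card (UNIV::'a set)"
proof -
  have "card {0::'a, 1} \<le> card (UNIV::'a set)" by (rule card_mono) auto
  then show ?thesis by simp
qed

lemma NN_pos: "0 < (card (UNIV::'a set) - 1)" using q_ge2 by simp

lemma card_GG: "card (UNIV - {0::'a}) = (card (UNIV::'a set) - 1)" by (simp add: card_Diff_singleton)

lemma powN: fixes x :: 'a assumes "x \<noteq> 0" shows "x ^ (card (UNIV::'a set) - 1) = 1"
proof -
  have bij: "bij_betw (\<lambda>y. x * y) (UNIV - {0::'a}) (UNIV - {0::'a})"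
    using assms by (intro bij_betwI[of _ _ _ "\<lambda>y. y / x"]) auto
  have "(\<Prod>y\<in>(UNIV - {0::'a}). x * y) = (\<Prod>y\<in>(UNIV - {0::'a}). y)"
    using prod.reindex_bij_betw[OF bij, of "\<lambda>y. y"] by simp
  moreover have "(\<Prod>y\<in>(UNIV - {0::'a}). x * y) = x ^ (card (UNIV::'a set) - 1) * (\<Prod>y\<in>(UNIV - {0::'a}). y)"
    by (simp add: prod.distrib card_GG)
  moreover have "(\<Prod>y\<in>(UNIV - {0::'a}). y) \<noteq> 0" by simp
  ultimately show ?thesis by simp
qed

lemma gpow_mod: "g ^ i = g ^ (i mod (card (UNIV::'a set) - 1))"
proof -
  have "g ^ i = g ^ ((card (UNIV::'a set) - 1) * (i div (card (UNIV::'a set) - 1)) + i mod (card (UNIV::'a set) - 1))" by simp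
  also have "\<dots> = (g ^ (card (UNIV::'a set) - 1)) ^ (i div (card (UNIV::'a set) - 1)) * g ^ (i mod (card (UNIV::'a set) - 1))" by (simp only: power_add power_mult)
  finally show ?thesis using powN[OF g_nz] by simp
qed

lemma g_img: "(\<lambda>i. g ^ i) ` {..<(card (UNIV::'a set) - 1)} = (UNIV - {0::'a})"
proof (intro equalityI subsetI)
  fix x assume "x \<in> (\<lambda>i. g ^ i) ` {..<(card (UNIV::'a set) - 1)}" then show "x \<in> (UNIV - {0::'a})" using g_nz by auto
next
  fix x assume "x \<in> (UNIV - {0::'a})"
  then obtain i where "x = g ^ i" using gen by auto
  then have "x = g ^ (i mod (card (UNIV::'a set) - 1))" using gpow_mod by simp
  then show "x \<in> (\<lambda>i. g ^ i) ` {..<(card (UNIV::'a set) - 1)}" using NN_pos by auto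
qed

lemma g_inj: "inj_on (\<lambda>i. g ^ i) {..<(card (UNIV::'a set) - 1)}"
proof (rule eq_card_imp_inj_on)
  show "card ((\<lambda>i. g ^ i) ` {..<(card (UNIV::'a set) - 1)}) = card {..<(card (UNIV::'a set) - 1)}" unfolding g_img by (simp add: card_GG)
qed simp

lemma gpow_eq: "g ^ i = g ^ j \<longleftrightarrow> [i = j] (mod (card (UNIV::'a set) - 1))"
proof
  assume "g ^ i = g ^ j"
  then have "g ^ (i mod (card (UNIV::'a set) - 1)) = g ^ (j mod (card (UNIV::'a set) - 1))" using gpow_mod by metis
  then have "i mod (card (UNIV::'a set) - 1) = j mod (card (UNIV::'a set) - 1)" using g_inj NN_pos by (auto dest: inj_onD)
  then show "[i = j] (mod (card (UNIV::'a set) - 1))" by (simp add: cong_def)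
next
  assume "[i = j] (mod (card (UNIV::'a set) - 1))"
  then show "g ^ i = g ^ j" using gpow_mod by (metis cong_def)
qed

definition ind :: "'a \<Rightarrow> nat" where "ind x = inv_into {..<(card (UNIV::'a set) - 1)} (\<lambda>i. g ^ i) x"

lemma ind_lt: "x \<noteq> 0 \<Longrightarrow> ind x < (card (UNIV::'a set) - 1)"
  unfolding ind_def using g_img by (metis DiffI UNIV_I inv_into_into lessThan_iff singletonD)

lemma g_ind: "x \<noteq> 0 \<Longrightarrow> g ^ ind x = x"
  unfolding ind_def using g_img by (metis DiffI UNIV_I f_inv_into_f singletonD)

lemma ind_cong: "x \<noteq> 0 \<Longrightarrow> g ^ i = x \<Longrightarrow> [i = ind x] (mod (card (UNIV::'a set) - 1))"
  using g_ind gpow_eq by metis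

lemma ind_mult: "x \<noteq> 0 \<Longrightarrow> y \<noteq> 0 \<Longrightarrow> [ind (x*y) = ind x + ind y] (mod (card (UNIV::'a set) - 1))"
proof -
  assume xy: "x \<noteq> 0" "y \<noteq> 0"
  then have "g ^ (ind x + ind y) = x * y" using g_ind by (simp add: power_add)
  then show ?thesis using ind_cong[of "x*y"] xy by (simp add: cong_sym)
qed

lemma ind_pow_cong: "[ind (g ^ i) = i] (mod (card (UNIV::'a set) - 1))"
  using ind_cong[of "g^i" i] g_nz by (simp add: cong_sym)

lemma pow_helper: "a \<noteq> 0 \<Longrightarrow> a * (g ^ i) ^ m = g ^ (m * i + ind a)"
proof -
  assume a: "a \<noteq> 0"
  have "(g ^ i) ^ m = g ^ (m * i)" by (metis power_mult mult.commute)
  then show ?thesis using g_ind[OF a] by (simp add: power_add mult.commute)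
qed

lemma fib_count:
  assumes a: "a \<noteq> 0" and y: "y \<noteq> 0" and m: "0 < m"
  shows "card {x. a * x ^ m = y} = (if [ind a = ind y] (mod gcd m (card (UNIV::'a set) - 1)) then gcd m (card (UNIV::'a set) - 1) else 0)"
proof -
  have set: "{x. a * x ^ m = y} = (\<lambda>i. g ^ i) ` {i\<in>{..<(card (UNIV::'a set) - 1)}. [m * i + ind a = ind y] (mod (card (UNIV::'a set) - 1))}"
  proof (intro equalityI subsetI)
    fix x assume "x \<in> {x. a * x ^ m = y}"
    then have x: "a * x ^ m = y" by simp
    then have x0: "x \<noteq> 0" using y m by auto
    have "g ^ (m * ind x + ind a) = a * x ^ m"
      using pow_helper[OF a, of "ind x" m] g_ind[OF x0] by simp
    then have "[m * ind x + ind a = ind y] (mod (card (UNIV::'a set) - 1))" using ind_cong[OF y] x by simp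
    then show "x \<in> (\<lambda>i. g ^ i) ` {i\<in>{..<(card (UNIV::'a set) - 1)}. [m * i + ind a = ind y] (mod (card (UNIV::'a set) - 1))}"
      using ind_lt[OF x0] g_ind[OF x0] by (intro image_eqI[of _ _ "ind x"]) auto
  next
    fix x assume "x \<in> (\<lambda>i. g ^ i) ` {i\<in>{..<(card (UNIV::'a set) - 1)}. [m * i + ind a = ind y] (mod (card (UNIV::'a set) - 1))}"
    then obtain i where i: "x = g ^ i" "[m * i + ind a = ind y] (mod (card (UNIV::'a set) - 1))" by auto
    have "a * x ^ m = g ^ (m * i + ind a)"
      using pow_helper[OF a, of i m] i(1) by simp
    also have "\<dots> = g ^ (ind y)" using i(2) gpow_eq by blast
    finally show "x \<in> {x. a * x ^ m = y}" using g_ind[OF y] by simp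
  qed
  have "card {x. a * x ^ m = y} = card {i\<in>{..<(card (UNIV::'a set) - 1)}. [m * i + ind a = ind y] (mod (card (UNIV::'a set) - 1))}"
    unfolding set by (rule card_image) (rule inj_on_subset[OF g_inj], auto)
  also have "\<dots> = card {i\<in>{..<(card (UNIV::'a set) - 1)}. [int m * int i + int (ind a) = int (ind y)] (mod int (card (UNIV::'a set) - 1))}"
    by (simp add: cong_int_iff[symmetric])
  also have "\<dots> = (if [int (ind a) = int (ind y)] (mod gcd (int m) (int (card (UNIV::'a set) - 1))) then nat (gcd (int m) (int (card (UNIV::'a set) - 1))) else 0)"
    by (rule L1[OF NN_pos])
  also have "\<dots> = (if [ind a = ind y] (mod gcd m (card (UNIV::'a set) - 1)) then gcd m (card (UNIV::'a set) - 1) else 0)"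
    by (simp add: gcd_int_def cong_int_iff)
  finally show ?thesis .
qed

lemma fib_zero: "a \<noteq> 0 \<Longrightarrow> 0 < m \<Longrightarrow> card {x. a * x ^ m = (0::'a)} = 1"
proof -
  assume "a \<noteq> 0" "0 < m"
  then have "{x. a * x ^ m = (0::'a)} = {0}" by auto
  then show ?thesis by simp
qed

lemma unique_lambda:
  assumes u: "u \<noteq> 0" and v: "v \<noteq> 0" and cop: "gcd (int A - int B) (int (card (UNIV::'a set) - 1)) = 1"
  shows "card {l\<in>(UNIV - {0::'a}). l ^ B * u = l ^ A * v} = 1"
proof -
  have set: "{l\<in>(UNIV - {0::'a}). l ^ B * u = l ^ A * v} = (\<lambda>i. g ^ i) ` {i\<in>{..<(card (UNIV::'a set) - 1)}. [B * i + ind u = A * i + ind v] (mod (card (UNIV::'a set) - 1))}"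
  proof (intro equalityI subsetI)
    fix l assume "l \<in> {l\<in>(UNIV - {0::'a}). l ^ B * u = l ^ A * v}"
    then have l: "l \<noteq> 0" "l ^ B * u = l ^ A * v" by auto
    have e1: "l ^ B * u = g ^ (B * ind l + ind u)"
      using pow_helper[OF u, of "ind l" B] g_ind[OF l(1)] by (simp add: mult.commute)
    have e2: "l ^ A * v = g ^ (A * ind l + ind v)"
      using pow_helper[OF v, of "ind l" A] g_ind[OF l(1)] by (simp add: mult.commute)
    have "[B * ind l + ind u = A * ind l + ind v] (mod (card (UNIV::'a set) - 1))" using l(2) e1 e2 gpow_eq by simp
    then show "l \<in> (\<lambda>i. g ^ i) ` {i\<in>{..<(card (UNIV::'a set) - 1)}. [B * i + ind u = A * i + ind v] (mod (card (UNIV::'a set) - 1))}"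
      using ind_lt[OF l(1)] g_ind[OF l(1)] by (intro image_eqI[of _ _ "ind l"]) auto
  next
    fix l assume "l \<in> (\<lambda>i. g ^ i) ` {i\<in>{..<(card (UNIV::'a set) - 1)}. [B * i + ind u = A * i + ind v] (mod (card (UNIV::'a set) - 1))}"
    then obtain i where i: "l = g ^ i" "[B * i + ind u = A * i + ind v] (mod (card (UNIV::'a set) - 1))" by auto
    have e1: "l ^ B * u = g ^ (B * i + ind u)"
      using pow_helper[OF u, of i B] i(1) by (simp add: mult.commute)
    have e2: "l ^ A * v = g ^ (A * i + ind v)"
      using pow_helper[OF v, of i A] i(1) by (simp add: mult.commute)
    show "l \<in> {l\<in>(UNIV - {0::'a}). l ^ B * u = l ^ A * v}" using e1 e2 i(2) gpow_eq i(1) g_nz by auto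
  qed
  have "card {l\<in>(UNIV - {0::'a}). l ^ B * u = l ^ A * v} = card {i\<in>{..<(card (UNIV::'a set) - 1)}. [B * i + ind u = A * i + ind v] (mod (card (UNIV::'a set) - 1))}"
    unfolding set by (rule card_image) (rule inj_on_subset[OF g_inj], auto)
  also have "\<dots> = card {i\<in>{..<(card (UNIV::'a set) - 1)}. [(int B - int A) * int i + int (ind u) = int (ind v)] (mod int (card (UNIV::'a set) - 1))}"
  proof -
    have "[B * i + ind u = A * i + ind v] (mod (card (UNIV::'a set) - 1)) \<longleftrightarrow> [(int B - int A) * int i + int (ind u) = int (ind v)] (mod int (card (UNIV::'a set) - 1))" for i
    proof -
      have "[B * i + ind u = A * i + ind v] (mod (card (UNIV::'a set) - 1)) \<longleftrightarrow> [int B * int i + int (ind u) = int A * int i + int (ind v)] (mod int (card (UNIV::'a set) - 1))"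
        by (simp add: cong_int_iff[symmetric])
      also have "\<dots> \<longleftrightarrow> [(int B - int A) * int i + int (ind u) = int (ind v)] (mod int (card (UNIV::'a set) - 1))"
        by (simp add: cong_iff_dvd_diff algebra_simps)
      finally show ?thesis .
    qed
    then show ?thesis by simp
  qed
  also have "\<dots> = 1"
  proof -
    have "gcd (int B - int A) (int (card (UNIV::'a set) - 1)) = 1" using cop
      by (metis gcd_neg1_int minus_diff_eq)
    then show ?thesis by (subst L1[OF NN_pos]) auto
  qed
  finally show ?thesis .
qed

end

lemma qc_zero [simp]: "quad_char (0::'a::field) = 0" by (simp add: quad_char_def)

lemma qc_pm: "x \<noteq> 0 \<Longrightarrow> quad_char x = 1 \<or> quad_char x = -1"
  by (simp add: quad_char_def)

lemma qc_sq: "(x::'a::field) \<noteq> 0 \<Longrightarrow> quad_char x * quad_char x = 1"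
  by (simp add: quad_char_def)

context ffg
begin

lemma cong_mod2: "even (card (UNIV::'a set) - 1) \<Longrightarrow> [i = j] (mod (card (UNIV::'a set) - 1)) \<Longrightarrow> even i = even j"
  by (metis cong2_iff cong_dvd_modulus_nat)

lemma qc_ind:
  assumes ev: "even (card (UNIV::'a set) - 1)" and x: "(x::'a) \<noteq> 0"
  shows "quad_char x = (-1) ^ ind x"
proof -
  have "(\<exists>y. y ^ 2 = x) \<longleftrightarrow> even (ind x)"
  proof
    assume "\<exists>y. y ^ 2 = x"
    then obtain y where y: "y ^ 2 = x" by blast
    then have y0: "y \<noteq> 0" using x by auto
    have "g ^ (2 * ind y) = x" using g_ind[OF y0] y by (metis power_mult mult.commute)
    then have "[2 * ind y = ind x] (mod (card (UNIV::'a set) - 1))" using ind_cong[OF x] by simp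
    then show "even (ind x)" using cong_mod2[OF ev] by fastforce
  next
    assume "even (ind x)"
    then obtain k where k: "ind x = 2 * k" by (elim evenE)
    have "(g ^ k) ^ 2 = x" using g_ind[OF x] k by (metis power_mult mult.commute)
    then show "\<exists>y. y ^ 2 = x" by blast
  qed
  then show ?thesis using x by (auto simp: quad_char_def)
qed

lemma qc_mult:
  assumes ev: "even (card (UNIV::'a set) - 1)"
  shows "quad_char (x * y) = quad_char x * quad_char (y::'a)"
proof (cases "x = 0 \<or> y = 0")
  case True then show ?thesis by auto
next
  case False
  then have xy: "x \<noteq> 0" "y \<noteq> 0" "x * y \<noteq> 0" by auto
  have "even (ind (x*y)) = even (ind x + ind y)" using ind_mult[OF xy(1,2)] cong_mod2[OF ev] by blast
  then have "(-1::int) ^ ind (x*y) = (-1) ^ (ind x + ind y)"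
    by (metis neg_one_even_power neg_one_odd_power)
  then show ?thesis using qc_ind[OF ev] xy by (simp add: power_add)
qed

lemma sum_alt: "even N \<Longrightarrow> (\<Sum>i<N. (-1::int) ^ i) = 0"
proof -
  assume "even N"
  then obtain k where "N = 2 * k" by (elim evenE)
  moreover have "(\<Sum>i<2*k. (-1::int) ^ i) = 0" by (induction k) auto
  ultimately show ?thesis by simp
qed

lemma sum_GG: "(\<Sum>x\<in>UNIV. f x) = (\<Sum>x\<in>UNIV - {0::'a}. f x) + f 0" for f :: "'a \<Rightarrow> int"
  by (metis add.commute finite_class.finite_UNIV iso_tuple_UNIV_I sum.remove)

lemma qc_sum:
  assumes ev: "even (card (UNIV::'a set) - 1)"
  shows "(\<Sum>x\<in>UNIV. quad_char (x::'a)) = 0"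
proof -
  have "(\<Sum>x\<in>UNIV. quad_char (x::'a)) = (\<Sum>x\<in>UNIV - {0::'a}. quad_char x)" by (simp add: sum_GG)
  also have "\<dots> = (\<Sum>i<card (UNIV::'a set) - 1. quad_char (g ^ i))"
    unfolding g_img[symmetric] by (rule sum.reindex[OF g_inj, unfolded comp_def])
  also have "\<dots> = (\<Sum>i<card (UNIV::'a set) - 1. (-1) ^ i)"
  proof (rule sum.cong[OF refl])
    fix i assume "i \<in> {..<card (UNIV::'a set) - 1}"
    moreover have "ind (g ^ i) < card (UNIV::'a set) - 1" using ind_lt g_nz by simp
    ultimately have "ind (g ^ i) = i" using ind_pow_cong[of i] by (simp add: cong_def)
    then show "quad_char (g ^ i) = (-1) ^ i" using qc_ind[OF ev] g_nz by simp
  qed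
  also have "\<dots> = 0" using ev by (rule sum_alt)
  finally show ?thesis .
qed

lemma qc_sum_shift:
  assumes ev: "even (card (UNIV::'a set) - 1)"
  shows "(\<Sum>y\<in>UNIV. quad_char (w - y::'a)) = 0"
proof -
  have "(\<Sum>y\<in>UNIV. quad_char (w - y::'a)) = (\<Sum>z\<in>UNIV. quad_char (z::'a))"
  proof -
    have b: "bij_betw (\<lambda>y. w - y) UNIV (UNIV::'a set)" by (rule bij_betwI[of _ _ _ "\<lambda>y. w - y"]) auto
    show ?thesis using sum.reindex_bij_betw[OF b, of "quad_char :: 'a \<Rightarrow> int"] by simp
  qed
  then show ?thesis using qc_sum[OF ev] by simp
qed

lemma J2:
  assumes ev: "even (card (UNIV::'a set) - 1)"
  shows "(\<Sum>y\<in>UNIV. quad_char y * quad_char (w - y::'a))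
       = quad_char (-1::'a) * (if w = 0 then int (card (UNIV::'a set)) - 1 else -1)"
proof (cases "w = 0")
  case True
  have "(\<Sum>y\<in>UNIV. quad_char y * quad_char (w - y::'a)) = (\<Sum>y\<in>UNIV - {0::'a}. quad_char y * quad_char (- y))"
    using True by (simp add: sum_GG)
  also have "\<dots> = (\<Sum>y\<in>UNIV - {0::'a}. quad_char (-1::'a))"
  proof (rule sum.cong[OF refl])
    fix y :: 'a assume "y \<in> UNIV - {0}"
    then have "quad_char y * quad_char y = 1" by (simp add: qc_sq)
    moreover have "quad_char (-y) = quad_char (-1::'a) * quad_char y"
      using qc_mult[OF ev, of "-1" y] by simp
    ultimately show "quad_char y * quad_char (- y) = quad_char (-1::'a)"
      by (metis mult.left_commute mult.right_neutral)
  qed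
  also have "\<dots> = quad_char (-1::'a) * (int (card (UNIV::'a set)) - 1)"
    using card_GG q_ge2 by (simp add: of_nat_diff)
  finally show ?thesis using True by simp
next
  case False
  have "(\<Sum>y\<in>UNIV. quad_char y * quad_char (w - y::'a)) = (\<Sum>y\<in>UNIV - {0::'a}. quad_char y * quad_char (w - y))"
    by (simp add: sum_GG)
  also have "\<dots> = (\<Sum>y\<in>UNIV - {0::'a}. quad_char (w / y - 1))"
  proof (rule sum.cong[OF refl])
    fix y :: 'a assume "y \<in> UNIV - {0}"
    then have y: "y \<noteq> 0" by simp
    have "w - y = y * (w / y - 1)" using y by (simp add: field_simps)
    then have "quad_char (w - y) = quad_char y * quad_char (w / y - 1)" using qc_mult[OF ev] by simp
    then show "quad_char y * quad_char (w - y) = quad_char (w / y - 1)"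
      using qc_sq[OF y] by (metis mult.assoc mult_1)
  qed
  also have "\<dots> = (\<Sum>z\<in>UNIV - {0::'a}. quad_char (z - 1))"
    using False by (intro sum.reindex_bij_witness[of _ "\<lambda>z. w / z" "\<lambda>y. w / y"]) auto
  also have "\<dots> = (\<Sum>z\<in>UNIV. quad_char (z - 1::'a)) - quad_char (-1::'a)"
    by (simp add: sum_GG)
  also have "(\<Sum>z\<in>UNIV. quad_char (z - 1::'a)) = 0"
  proof -
    have "(\<Sum>z\<in>UNIV. quad_char (z - 1::'a)) = (\<Sum>z\<in>UNIV. quad_char (z::'a))"
    proof -
      have b: "bij_betw (\<lambda>y. y - 1) UNIV (UNIV::'a set)" by (rule bij_betwI[of _ _ _ "\<lambda>y. y + 1"]) auto
      show ?thesis using sum.reindex_bij_betw[OF b, of "quad_char :: 'a \<Rightarrow> int"] by simp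
    qed
    then show ?thesis using qc_sum[OF ev] by simp
  qed
  finally show ?thesis using False by simp
qed

end

definition cv :: "nat set \<Rightarrow> 'a::{finite,field} set \<Rightarrow> (nat \<Rightarrow> 'a \<Rightarrow> int) \<Rightarrow> 'a \<Rightarrow> int" where
  "cv S D \<phi> w = (\<Sum>c\<in>{c\<in>PiE S (\<lambda>_. D). (\<Sum>j\<in>S. c j) = w}. \<Prod>j\<in>S. \<phi> j (c j))"

lemma cv_empty: "cv {} D \<phi> w = (if w = 0 then 1 else 0)"
  by (auto simp: cv_def)

lemma cv_insert:
  assumes fin: "finite S" and i: "i \<notin> S"
  shows "cv (insert i S) D \<phi> w = (\<Sum>y\<in>D. \<phi> i y * cv S D \<phi> (w - y))"
proof -
  define A where "A = {c\<in>PiE (insert i S) (\<lambda>_. D). (\<Sum>j\<in>insert i S. c j) = w}"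
  define B where "B = Sigma D (\<lambda>y. {c\<in>PiE S (\<lambda>_. D). (\<Sum>j\<in>S. c j) = w - y})"
  define h where "h = (\<lambda>(y::'a, c::nat \<Rightarrow> 'a). c(i := y))"
  have sumupd: "(\<Sum>j\<in>S. (c(i := y)) j) = (\<Sum>j\<in>S. c j)" for c y
    using i by (intro sum.cong) auto
  have produpd: "(\<Prod>j\<in>S. \<phi> j ((c(i := y)) j)) = (\<Prod>j\<in>S. \<phi> j (c j))" for c y
    using i by (intro prod.cong) auto
  have inj: "inj_on h B"
  proof (rule inj_onI)
    fix p p' assume p: "p \<in> B" "p' \<in> B" "h p = h p'"
    obtain y c where yc: "p = (y, c)" by fastforce
    obtain y' c' where yc': "p' = (y', c')" by fastforce
    have "c i = undefined" "c' i = undefined" using p yc yc' i by (auto simp: B_def PiE_def extensional_def)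
    moreover have "c(i := y) = c'(i := y')" using p(3) yc yc' by (simp add: h_def)
    ultimately have "y = y'" "c = c'" by (metis fun_upd_same, metis fun_upd_triv fun_upd_upd)
    then show "p = p'" using yc yc' by simp
  qed
  have img: "h ` B = A"
  proof (intro equalityI subsetI)
    fix x assume "x \<in> h ` B"
    then obtain y c where yc: "y \<in> D" "c \<in> PiE S (\<lambda>_. D)" "(\<Sum>j\<in>S. c j) = w - y" "x = c(i := y)"
      by (auto simp: B_def h_def)
    have "x \<in> PiE (insert i S) (\<lambda>_. D)" using yc by (auto simp: PiE_def extensional_def Pi_def)
    moreover have "(\<Sum>j\<in>insert i S. x j) = w"
    proof -
      have "(\<Sum>j\<in>S. x j) = (\<Sum>j\<in>S. c j)" using yc(4) sumupd by simp
      moreover have "x i = y" using yc(4) by simp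
      ultimately show ?thesis using fin i yc(3) by simp
    qed
    ultimately show "x \<in> A" by (simp add: A_def)
  next
    fix x assume "x \<in> A"
    then have x: "x \<in> PiE (insert i S) (\<lambda>_. D)" "(\<Sum>j\<in>insert i S. x j) = w" by (auto simp: A_def)
    have "x(i := undefined) \<in> PiE S (\<lambda>_. D)" using x(1) i
      by (auto simp: PiE_def extensional_def Pi_def)
    moreover have "(\<Sum>j\<in>S. (x(i := undefined)) j) = w - x i"
    proof -
      have "(\<Sum>j\<in>S. (x(i := undefined)) j) = (\<Sum>j\<in>S. x j)" using sumupd by simp
      then show ?thesis using x(2) fin i by (simp add: algebra_simps)
    qed
    moreover have "x i \<in> D" using x(1) by auto
    ultimately have "(x i, x(i := undefined)) \<in> B" by (simp add: B_def)
    moreover have "h (x i, x(i := undefined)) = x" by (simp add: h_def)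
    ultimately show "x \<in> h ` B" by (metis image_eqI)
  qed
  have "cv (insert i S) D \<phi> w = (\<Sum>c\<in>A. \<Prod>j\<in>insert i S. \<phi> j (c j))" by (simp add: cv_def A_def)
  also have "\<dots> = (\<Sum>p\<in>B. \<Prod>j\<in>insert i S. \<phi> j (h p j))"
    unfolding img[symmetric] by (rule sum.reindex[OF inj, unfolded comp_def])
  also have "\<dots> = (\<Sum>p\<in>B. \<phi> i (fst p) * (\<Prod>j\<in>S. \<phi> j (snd p j)))"
  proof (rule sum.cong[OF refl])
    fix p assume "p \<in> B"
    obtain y c where p: "p = (y, c)" by fastforce
    have "(\<Prod>j\<in>insert i S. \<phi> j (h p j)) = \<phi> i (h p i) * (\<Prod>j\<in>S. \<phi> j (h p j))"
      using fin i by simp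
    also have "h p i = y" by (simp add: p h_def)
    also have "(\<Prod>j\<in>S. \<phi> j (h p j)) = (\<Prod>j\<in>S. \<phi> j (c j))"
      using produpd[of c y] by (simp add: p h_def)
    finally show "(\<Prod>j\<in>insert i S. \<phi> j (h p j)) = \<phi> i (fst p) * (\<Prod>j\<in>S. \<phi> j (snd p j))"
      by (simp add: p)
  qed
  also have "\<dots> = (\<Sum>y\<in>D. \<Sum>c\<in>{c\<in>PiE S (\<lambda>_. D). (\<Sum>j\<in>S. c j) = w - y}. \<phi> i y * (\<Prod>j\<in>S. \<phi> j (c j)))"
    unfolding B_def by (subst sum.Sigma) (auto simp: finite_PiE fin split_def)
  also have "\<dots> = (\<Sum>y\<in>D. \<phi> i y * cv S D \<phi> (w - y))"
    by (simp add: cv_def sum_distrib_left)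
  finally show ?thesis .
qed

lemma cv_total:
  assumes fin: "finite S"
  shows "(\<Sum>w\<in>UNIV. cv S D \<phi> w) = (\<Prod>j\<in>S. \<Sum>x\<in>D. \<phi> j x)"
proof -
  have "(\<Sum>w\<in>UNIV. cv S D \<phi> w) = (\<Sum>c\<in>PiE S (\<lambda>_. D). \<Prod>j\<in>S. \<phi> j (c j))"
    unfolding cv_def using fin
    by (intro sum.group) (auto simp: finite_PiE)
  also have "\<dots> = (\<Prod>j\<in>S. \<Sum>x\<in>D. \<phi> j x)"
    by (rule prod_sum_PiE[symmetric]) (use fin in auto)
  finally show ?thesis .
qed

lemma sum_neg_UNIV:
  fixes f :: "'a::{finite,field} \<Rightarrow> int"
  shows "(\<Sum>y\<in>UNIV. f (w - y)) = (\<Sum>z\<in>UNIV. f z)"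
proof -
  have b: "bij_betw (\<lambda>y. w - y) UNIV (UNIV::'a set)" by (rule bij_betwI[of _ _ _ "\<lambda>y. w - y"]) auto
  show ?thesis using sum.reindex_bij_betw[OF b, of f] by simp
qed

lemma cv_GG_UNIV:
  assumes fin: "finite S" and z: "\<forall>j\<in>S. \<phi> j 0 = 0"
  shows "cv S UNIV \<phi> w = cv S (UNIV - {0::'a::{finite,field}}) \<phi> w"
proof -
  define A where "A = {c \<in> PiE S (\<lambda>_. UNIV::'a set). sum c S = w}"
  define B where "B = {c \<in> PiE S (\<lambda>_. UNIV - {0::'a}). sum c S = w}"
  have "(\<Sum>c\<in>A. \<Prod>j\<in>S. \<phi> j (c j)) = (\<Sum>c\<in>B. \<Prod>j\<in>S. \<phi> j (c j))"
  proof (rule sum.mono_neutral_right)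
    show "finite A" using fin by (auto simp: A_def finite_PiE)
    show "B \<subseteq> A" by (auto simp: A_def B_def PiE_def Pi_def)
    show "\<forall>c\<in>A - B. (\<Prod>j\<in>S. \<phi> j (c j)) = 0"
    proof
      fix c assume c: "c \<in> A - B"
      then obtain j where "j \<in> S" "c j = 0" by (auto simp: A_def B_def PiE_def Pi_def)
      then have "\<phi> j (c j) = 0" using z by simp
      then show "(\<Prod>j\<in>S. \<phi> j (c j)) = 0" using fin \<open>j \<in> S\<close> by (intro prod_zero) auto
    qed
  qed
  then show ?thesis by (simp add: cv_def A_def B_def)
qed


context ffg
begin

definition KF :: "nat \<Rightarrow> nat \<Rightarrow> 'a \<Rightarrow> int" where
  "KF v r w = (let Q = int (card (UNIV::'a set)); e = quad_char (-1::'a) in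
     if v = 0 then (Q - 1) ^ r - (-1) ^ r + Q * (-1) ^ r * (if w = 0 then 1 else 0)
     else if odd v then (-1) ^ r * e ^ ((v - 1) div 2) * Q ^ ((v + 1) div 2) * quad_char w
     else (-1) ^ r * e ^ (v div 2) * Q ^ (v div 2) * (Q * (if w = 0 then 1 else 0) - 1))"

lemma cardGG_int: "int (card (UNIV - {0::'a})) = int (card (UNIV::'a set)) - 1"
  using card_GG q_ge2 by (simp add: of_nat_diff)

lemma sumGG_lin: "(\<Sum>y\<in>UNIV - {0::'a}. A + B * f y) = (int (card (UNIV::'a set)) - 1) * A + B * (\<Sum>y\<in>UNIV - {0::'a}. f y)"
  for A B :: int
proof -
  have "(\<Sum>y\<in>UNIV - {0::'a}. A + B * f y) = (\<Sum>y\<in>UNIV - {0::'a}. A) + B * (\<Sum>y\<in>UNIV - {0::'a}. f y)"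
    by (simp add: sum.distrib sum_distrib_left)
  also have "(\<Sum>y\<in>UNIV - {0::'a}. A) = int (card (UNIV - {0::'a})) * A" by (rule sum_constant)
  finally show ?thesis by (simp only: cardGG_int)
qed

lemma s1: "(\<Sum>y\<in>UNIV - {0::'a}. (if w = y then 1 else 0::int)) = (if w = 0 then 0 else 1)"
proof (cases "w = 0")
  case True then show ?thesis by (intro trans[OF sum.neutral]) auto
next
  case False
  have "(\<Sum>y\<in>UNIV - {0::'a}. (if w = y then 1 else 0::int)) = (\<Sum>y\<in>{w}. 1)"
    using False by (intro sum.mono_neutral_cong_right) auto
  then show ?thesis using False by simp
qed

lemma s2: "even (card (UNIV::'a set) - 1) \<Longrightarrow> (\<Sum>y\<in>UNIV - {0::'a}. quad_char (w - y)) = - quad_char w"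
  using qc_sum_shift[of w] sum_GG[of "\<lambda>y. quad_char (w - y)"] by simp

lemma s3: "(\<Sum>y\<in>UNIV - {0::'a}. quad_char y * (if w = y then 1 else 0)) = quad_char w"
proof (cases "w = 0")
  case True then show ?thesis by simp
next
  case False
  have "(\<Sum>y\<in>UNIV - {0::'a}. quad_char y * (if w = y then 1 else 0)) = (\<Sum>y\<in>{w}. quad_char y)"
    using False by (intro sum.mono_neutral_cong_right) auto
  then show ?thesis by simp
qed

lemma s4: "even (card (UNIV::'a set) - 1) \<Longrightarrow> (\<Sum>y\<in>UNIV - {0::'a}. quad_char y) = 0"
  using qc_sum sum_GG[of quad_char] by simp

lemma s5: "even (card (UNIV::'a set) - 1) \<Longrightarrow> (\<Sum>y\<in>UNIV - {0::'a}. quad_char y * quad_char (w - y))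
   = quad_char (-1::'a) * (int (card (UNIV::'a set)) * (if w = 0 then 1 else 0) - 1)"
  using J2[of w] sum_GG[of "\<lambda>y. quad_char y * quad_char (w - y)"] by (simp split: if_splits)

lemma KF_free:
  assumes "v = 0 \<or> even (card (UNIV::'a set) - 1)"
  shows "(\<Sum>y\<in>UNIV - {0::'a}. KF v r (w - y)) = KF v (Suc r) w"
proof -
  define Q where "Q = int (card (UNIV::'a set))"
  define e where "e = quad_char (-1::'a)"
  show ?thesis
  proof (cases "v = 0")
    case True
    have "(\<Sum>y\<in>UNIV - {0::'a}. KF v r (w - y))
      = (\<Sum>y\<in>UNIV - {0::'a}. ((Q - 1) ^ r - (-1) ^ r) + (Q * (-1) ^ r) * (if w = y then 1 else 0))"
      using True by (simp add: KF_def Q_def Let_def)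
    also have "\<dots> = (Q - 1) * ((Q - 1) ^ r - (-1) ^ r) + (Q * (-1) ^ r) * (if w = 0 then 0 else 1)"
      unfolding sumGG_lin s1 Q_def by simp
    also have "\<dots> = KF v (Suc r) w"
      using True by (cases "w = 0") (auto simp: KF_def Q_def Let_def algebra_simps)
    finally show ?thesis .
  next
    case False
    then have ev: "even (card (UNIV::'a set) - 1)" using assms by simp
    show ?thesis
    proof (cases "odd v")
      case True
      have "(\<Sum>y\<in>UNIV - {0::'a}. KF v r (w - y))
        = (\<Sum>y\<in>UNIV - {0::'a}. ((-1) ^ r * e ^ ((v - 1) div 2) * Q ^ ((v + 1) div 2)) * quad_char (w - y))"
        using True False by (simp add: KF_def Q_def e_def Let_def)
      also have "\<dots> = ((-1) ^ r * e ^ ((v - 1) div 2) * Q ^ ((v + 1) div 2)) * (- quad_char w)"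
        by (simp add: sum_distrib_left[symmetric] s2[OF ev])
      also have "\<dots> = KF v (Suc r) w"
        using True False by (simp add: KF_def Q_def e_def Let_def)
      finally show ?thesis .
    next
      case odd: False
      have "(\<Sum>y\<in>UNIV - {0::'a}. KF v r (w - y))
        = (\<Sum>y\<in>UNIV - {0::'a}. (- ((-1) ^ r * e ^ (v div 2) * Q ^ (v div 2))) + ((-1) ^ r * e ^ (v div 2) * Q ^ (v div 2) * Q) * (if w = y then 1 else 0))"
        using odd False by (intro sum.cong refl) (simp add: KF_def Q_def e_def Let_def algebra_simps)
      also have "\<dots> = (Q - 1) * (- ((-1) ^ r * e ^ (v div 2) * Q ^ (v div 2))) + ((-1) ^ r * e ^ (v div 2) * Q ^ (v div 2) * Q) * (if w = 0 then 0 else 1)"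
        unfolding sumGG_lin s1 Q_def by simp
      also have "\<dots> = KF v (Suc r) w"
        using odd False by (cases "w = 0") (auto simp: KF_def Q_def e_def Let_def algebra_simps)
      finally show ?thesis .
    qed
  qed
qed

lemma KF_eta:
  assumes ev: "even (card (UNIV::'a set) - 1)"
  shows "(\<Sum>y\<in>UNIV - {0::'a}. quad_char y * KF v r (w - y)) = KF (Suc v) r w"
proof -
  define Q where "Q = int (card (UNIV::'a set))"
  define e where "e = quad_char (-1::'a)"
  show ?thesis
  proof (cases "v = 0")
    case True
    have "(\<Sum>y\<in>UNIV - {0::'a}. quad_char y * KF v r (w - y))
      = (\<Sum>y\<in>UNIV - {0::'a}. ((Q - 1) ^ r - (-1) ^ r) * quad_char y + (Q * (-1) ^ r) * (quad_char y * (if w = y then 1 else 0)))"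
      using True by (intro sum.cong refl) (simp add: KF_def Q_def Let_def algebra_simps)
    also have "\<dots> = ((Q - 1) ^ r - (-1) ^ r) * (\<Sum>y\<in>UNIV - {0::'a}. quad_char y) + (Q * (-1) ^ r) * quad_char w"
      by (simp add: sum.distrib sum_distrib_left[symmetric] s3)
    also have "\<dots> = KF (Suc v) r w"
      using True by (simp add: s4[OF ev] KF_def Q_def Let_def algebra_simps)
    finally show ?thesis .
  next
    case False
    show ?thesis
    proof (cases "odd v")
      case True
      then obtain k where k: "v = 2 * k + 1" by (elim oddE)
      have "(\<Sum>y\<in>UNIV - {0::'a}. quad_char y * KF v r (w - y))
        = (\<Sum>y\<in>UNIV - {0::'a}. ((-1) ^ r * e ^ k * Q ^ (k + 1)) * (quad_char y * quad_char (w - y)))"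
        using k by (intro sum.cong refl) (simp add: KF_def Q_def e_def Let_def algebra_simps)
      also have "\<dots> = ((-1) ^ r * e ^ k * Q ^ (k + 1)) * (e * (Q * (if w = 0 then 1 else 0) - 1))"
        by (simp add: sum_distrib_left[symmetric] s5[OF ev] e_def Q_def)
      also have "\<dots> = KF (Suc v) r w"
        using k by (simp add: KF_def Q_def e_def Let_def algebra_simps)
      finally show ?thesis .
    next
      case odd: False
      then have "even v" by simp
      then obtain k where k: "v = 2 * k" by (elim evenE)
      have k0: "k > 0" using k False by simp
      have "(\<Sum>y\<in>UNIV - {0::'a}. quad_char y * KF v r (w - y))
        = (\<Sum>y\<in>UNIV - {0::'a}. (- ((-1) ^ r * e ^ k * Q ^ k)) * quad_char y + ((-1) ^ r * e ^ k * Q ^ k * Q) * (quad_char y * (if w = y then 1 else 0)))"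
        using k k0 by (intro sum.cong refl) (simp add: KF_def Q_def e_def Let_def algebra_simps)
      also have "\<dots> = (- ((-1) ^ r * e ^ k * Q ^ k)) * (\<Sum>y\<in>UNIV - {0::'a}. quad_char y) + ((-1) ^ r * e ^ k * Q ^ k * Q) * quad_char w"
        by (simp only: sum.distrib sum_distrib_left[symmetric] s3)
      also have "\<dots> = KF (Suc v) r w"
        using k k0 by (simp add: s4[OF ev] KF_def Q_def e_def Let_def algebra_simps)
      finally show ?thesis .
    qed
  qed
qed

lemma KG:
  assumes fin: "finite S" and ev: "V \<inter> S = {} \<or> even (card (UNIV::'a set) - 1)"
  shows "int (card (UNIV::'a set)) * cv S (UNIV - {0::'a}) (\<lambda>j. if j \<in> V then quad_char else (\<lambda>_. 1)) w
       = KF (card (S \<inter> V)) (card (S - V)) w"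
  using fin ev
proof (induction S arbitrary: w rule: finite_induct)
  case empty
  then show ?case by (simp add: cv_empty KF_def)
next
  case (insert i S)
  define \<phi> where "\<phi> = (\<lambda>j. if j \<in> V then quad_char else (\<lambda>_::'a. 1::int))"
  have IH: "int (card (UNIV::'a set)) * cv S (UNIV - {0}) \<phi> w' = KF (card (S \<inter> V)) (card (S - V)) w'" for w'
    using insert by (auto simp: \<phi>_def)
  have "int (card (UNIV::'a set)) * cv (insert i S) (UNIV - {0}) \<phi> w
      = (\<Sum>y\<in>UNIV - {0}. \<phi> i y * KF (card (S \<inter> V)) (card (S - V)) (w - y))"
    by (simp add: cv_insert[OF insert(1,2)] sum_distrib_left IH[symmetric] algebra_simps)
  also have "\<dots> = KF (card (insert i S \<inter> V)) (card (insert i S - V)) w"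
  proof (cases "i \<in> V")
    case True
    have ev: "even (card (UNIV::'a set) - 1)" using insert(4) True by auto
    have c: "card (insert i S \<inter> V) = Suc (card (S \<inter> V))" "insert i S - V = S - V"
      using True insert(1,2) by auto
    show ?thesis unfolding c using KF_eta[OF ev] True by (simp add: \<phi>_def)
  next
    case False
    have c: "insert i S \<inter> V = S \<inter> V" "card (insert i S - V) = Suc (card (S - V))"
      using False insert(1,2) by (auto simp: insert_Diff_if)
    have h: "card (S \<inter> V) = 0 \<or> even (card (UNIV::'a set) - 1)" using insert(1,4) by auto
    show ?thesis unfolding c using KF_free[OF h] False by (simp add: \<phi>_def)
  qed
  finally show ?case by (simp add: \<phi>_def)
qed

end

lemma fiber_count:
  fixes \<psi> :: "nat \<Rightarrow> 'a::{finite,field} \<Rightarrow> 'a"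
  assumes fin: "finite I" and maps: "\<forall>j\<in>I. \<forall>x\<in>D. \<psi> j x \<in> C"
  shows "card {x\<in>PiE I (\<lambda>_. D). (\<Sum>j\<in>I. \<psi> j (x j)) = w}
       = (\<Sum>c\<in>{c\<in>PiE I (\<lambda>_. C). (\<Sum>j\<in>I. c j) = w}. \<Prod>j\<in>I. card {x\<in>D. \<psi> j x = c j})"
proof -
  define A where "A = {x\<in>PiE I (\<lambda>_. D). (\<Sum>j\<in>I. \<psi> j (x j)) = w}"
  define T where "T = {c\<in>PiE I (\<lambda>_. C). (\<Sum>j\<in>I. c j) = w}"
  define h where "h = (\<lambda>x. restrict (\<lambda>j. \<psi> j (x j)) I)"
  have hA: "h ` A \<subseteq> T" unfolding h_def using maps by (auto simp: A_def T_def PiE_def Pi_def)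
  have "card A = (\<Sum>x\<in>A. 1)" by simp
  also have "\<dots> = (\<Sum>c\<in>T. \<Sum>x\<in>{x\<in>A. h x = c}. 1)"
  proof -
    have finA: "finite A" and finT: "finite T" using fin by (auto simp: A_def T_def finite_PiE)
    show ?thesis using sum.group[OF finA finT hA, of "\<lambda>_. 1::nat"] by simp
  qed
  also have "\<dots> = (\<Sum>c\<in>T. \<Prod>j\<in>I. card {x\<in>D. \<psi> j x = c j})"
  proof (rule sum.cong[OF refl])
    fix c assume c: "c \<in> T"
    have "{x\<in>A. h x = c} = PiE I (\<lambda>j. {x\<in>D. \<psi> j x = c j})"
    proof (intro equalityI subsetI)
      fix x assume "x \<in> {x\<in>A. h x = c}"
      then have x: "x \<in> PiE I (\<lambda>_. D)" "h x = c" by (auto simp: A_def)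
      have "\<psi> j (x j) = c j" if "j \<in> I" for j using x(2) that by (auto simp: h_def dest: fun_cong[of _ _ j])
      then show "x \<in> PiE I (\<lambda>j. {x\<in>D. \<psi> j x = c j})" using x(1) by (auto simp: PiE_def Pi_def)
    next
      fix x assume x: "x \<in> PiE I (\<lambda>j. {x\<in>D. \<psi> j x = c j})"
      have hx: "h x = c"
      proof
        fix j show "h x j = c j"
          using x c by (cases "j \<in> I") (auto simp: h_def T_def PiE_def extensional_def)
      qed
      have "(\<Sum>j\<in>I. \<psi> j (x j)) = (\<Sum>j\<in>I. c j)" using x by (intro sum.cong) auto
      then show "x \<in> {x\<in>A. h x = c}" using x hx c by (auto simp: A_def T_def PiE_def Pi_def)
    qed
    then show "(\<Sum>x\<in>{x\<in>A. h x = c}. 1) = (\<Prod>j\<in>I. card {x\<in>D. \<psi> j x = c j})"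
      using fin by (simp add: card_PiE)
  qed
  finally show ?thesis by (simp add: A_def T_def)
qed

context ffg
begin

lemma avg:
  fixes F :: "(nat \<Rightarrow> 'a) \<Rightarrow> int"
  assumes finI: "finite I" and D: "D = UNIV \<or> D = UNIV - {0::'a}"
  defines "C \<equiv> {c\<in>PiE I (\<lambda>_. D). (\<Sum>j\<in>I. c j) = 0}"
  shows "int (card (UNIV::'a set) - 1) * (\<Sum>c\<in>C. F c) = (\<Sum>c\<in>C. \<Sum>s<card (UNIV::'a set) - 1. F (restrict (\<lambda>j. g ^ s * c j) I))"
proof -
  have inv: "(\<Sum>c\<in>C. F (restrict (\<lambda>j. l * c j) I)) = (\<Sum>c\<in>C. F c)" if l: "l \<noteq> 0" for l :: 'a
  proof -
    have b: "bij_betw (\<lambda>c. restrict (\<lambda>j. l * c j) I) C C"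
    proof (rule bij_betwI[of _ _ _ "\<lambda>c. restrict (\<lambda>j. c j / l) I"])
      show "(\<lambda>c. restrict (\<lambda>j. l * c j) I) \<in> C \<rightarrow> C"
        using l D by (auto simp: C_def PiE_def Pi_def sum_distrib_left[symmetric])
      show "(\<lambda>c. restrict (\<lambda>j. c j / l) I) \<in> C \<rightarrow> C"
        using l D by (auto simp: C_def PiE_def Pi_def sum_divide_distrib[symmetric])
      show "restrict (\<lambda>j. restrict (\<lambda>j. l * c j) I j / l) I = c" if "c \<in> C" for c
        using that l by (auto simp: C_def PiE_def extensional_def fun_eq_iff)
      show "restrict (\<lambda>j. l * restrict (\<lambda>j. c j / l) I j) I = c" if "c \<in> C" for c
        using that l by (auto simp: C_def PiE_def extensional_def fun_eq_iff)
    qed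
    show ?thesis using sum.reindex_bij_betw[OF b, of F] by simp
  qed
  have "(\<Sum>c\<in>C. \<Sum>s<card (UNIV::'a set) - 1. F (restrict (\<lambda>j. g ^ s * c j) I))
      = (\<Sum>s<card (UNIV::'a set) - 1. \<Sum>c\<in>C. F (restrict (\<lambda>j. g ^ s * c j) I))"
    by (rule sum.swap)
  also have "\<dots> = (\<Sum>s<card (UNIV::'a set) - 1. \<Sum>c\<in>C. F c)"
    using inv g_nz by simp
  finally show ?thesis by simp
qed

lemma perc:
  fixes a :: "nat \<Rightarrow> 'a" and m :: "nat \<Rightarrow> nat" and c :: "nat \<Rightarrow> 'a"
  assumes finI: "finite I" and a_nz: "\<forall>j\<in>I. a j \<noteq> 0" and m_pos: "\<forall>j\<in>I. 0 < m j"
    and cop: "\<forall>i\<in>I. \<forall>j\<in>I. i \<noteq> j \<longrightarrow> coprime (ee (\<lambda>j. gcd (m j) (card (UNIV::'a set) - 1)) i) (ee (\<lambda>j. gcd (m j) (card (UNIV::'a set) - 1)) j)"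
  shows "(\<Sum>s<card (UNIV::'a set) - 1. \<Prod>j\<in>I. int (card {x. a j * x ^ m j = g ^ s * c j}))
       = int (card (UNIV::'a set) - 1) * (\<Sum>V\<in>{V. V \<subseteq> {j\<in>I. even (gcd (m j) (card (UNIV::'a set) - 1))} \<and> even (card V)}.
            \<Prod>j\<in>V. quad_char (a j) * quad_char (c j))"
proof -
  define N where "N = card (UNIV::'a set) - 1"
  define d where "d j = gcd (m j) N" for j
  define S where "S = {j\<in>I. c j \<noteq> 0}"
  define u where "u j = ind (a j) + d j * ind (c j) - ind (c j)" for j
  have N: "0 < N" using NN_pos by (simp add: N_def)
  have SI: "S \<subseteq> I" and finS: "finite S" using finI by (auto simp: S_def)
  have dpos: "\<forall>j\<in>S. 0 < d j \<and> d j dvd N" using N by (auto simp: d_def)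
  have key: "card {x. a j * x ^ m j = g ^ s * c j} = (if [s = u j] (mod d j) then d j else 0)"
    if j: "j \<in> S" for j s
  proof -
    have aj: "a j \<noteq> 0" and cj: "c j \<noteq> 0" and mj: "0 < m j" using j a_nz m_pos by (auto simp: S_def)
    have y: "g ^ s * c j \<noteq> 0" using cj g_nz by simp
    have "card {x. a j * x ^ m j = g ^ s * c j} = (if [ind (a j) = ind (g ^ s * c j)] (mod d j) then d j else 0)"
      using fib_count[OF aj y mj] by (simp add: d_def N_def)
    moreover have "[ind (g ^ s * c j) = s + ind (c j)] (mod d j)"
    proof -
      have "g ^ (s + ind (c j)) = g ^ s * c j" using g_ind[OF cj] by (simp add: power_add)
      then have "[s + ind (c j) = ind (g ^ s * c j)] (mod N)" using ind_cong[OF y] by (simp add: N_def)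
      moreover have "d j dvd N" by (simp add: d_def)
      ultimately show ?thesis using cong_dvd_modulus_nat cong_sym by blast
    qed
    moreover have "[ind (a j) = s + ind (c j)] (mod d j) \<longleftrightarrow> [s = u j] (mod d j)"
    proof -
      have dj: "d j > 0" using dpos j by auto
      have "[ind (a j) = s + ind (c j)] (mod d j) \<longleftrightarrow> [s + ind (c j) = ind (a j) + d j * ind (c j)] (mod d j)"
      proof -
        have e: "[ind (a j) + d j * ind (c j) = ind (a j)] (mod d j)" by (simp add: cong_def)
        show ?thesis by (meson cong_sym cong_trans e)
      qed
      also have "ind (a j) + d j * ind (c j) = u j + ind (c j)"
      proof -
        have "ind (c j) \<le> d j * ind (c j)" using dj by simp
        then show ?thesis unfolding u_def by linarith
      qed
      finally show ?thesis by (simp add: cong_add_rcancel_nat)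
    qed
    ultimately show ?thesis
    proof -
      assume h1: "card {x. a j * x ^ m j = g ^ s * c j} = (if [ind (a j) = ind (g ^ s * c j)] (mod d j) then d j else 0)"
        and h2: "[ind (g ^ s * c j) = s + ind (c j)] (mod d j)"
        and h3: "[ind (a j) = s + ind (c j)] (mod d j) \<longleftrightarrow> [s = u j] (mod d j)"
      have "[ind (a j) = ind (g ^ s * c j)] (mod d j) \<longleftrightarrow> [ind (a j) = s + ind (c j)] (mod d j)"
        using h2 cong_trans cong_sym by blast
      then show ?thesis using h1 h3 by simp
    qed
  qed
  have "(\<Sum>s<N. \<Prod>j\<in>I. int (card {x. a j * x ^ m j = g ^ s * c j}))
      = (\<Sum>s<N. \<Prod>j\<in>S. (if [s = u j] (mod d j) then int (d j) else 0))"
  proof (rule sum.cong[OF refl])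
    fix s
    have "(\<Prod>j\<in>I. int (card {x. a j * x ^ m j = g ^ s * c j})) = (\<Prod>j\<in>S. int (card {x. a j * x ^ m j = g ^ s * c j}))"
    proof (rule prod.mono_neutral_right[OF finI SI])
      show "\<forall>j\<in>I - S. int (card {x. a j * x ^ m j = g ^ s * c j}) = 1"
        using fib_zero a_nz m_pos by (auto simp: S_def)
    qed
    also have "\<dots> = (\<Prod>j\<in>S. (if [s = u j] (mod d j) then int (d j) else 0))"
      by (rule prod.cong[OF refl]) (simp add: key)
    finally show "(\<Prod>j\<in>I. int (card {x. a j * x ^ m j = g ^ s * c j})) = (\<Prod>j\<in>S. (if [s = u j] (mod d j) then int (d j) else 0))" .
  qed
  also have "\<dots> = int N * (\<Sum>V\<in>{V. V \<subseteq> {j\<in>S. even (d j)} \<and> even (card V)}. \<Prod>j\<in>V. (-1::int)^(u j))"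
  proof (rule crt_main[OF finS N dpos])
    show "\<forall>i\<in>S. \<forall>j\<in>S. i \<noteq> j \<longrightarrow> coprime (ee d i) (ee d j)"
    proof -
      have dfun: "d = (\<lambda>j. gcd (m j) (card (UNIV::'a set) - 1))" by (simp add: d_def N_def fun_eq_iff)
      show ?thesis using cop SI unfolding dfun by blast
    qed
  qed
  also have "(\<Sum>V\<in>{V. V \<subseteq> {j\<in>S. even (d j)} \<and> even (card V)}. \<Prod>j\<in>V. (-1::int)^(u j))
      = (\<Sum>V\<in>{V. V \<subseteq> {j\<in>I. even (d j)} \<and> even (card V)}. \<Prod>j\<in>V. quad_char (a j) * quad_char (c j))"
  proof (rule sum.mono_neutral_cong_left)
    show "finite {V. V \<subseteq> {j\<in>I. even (d j)} \<and> even (card V)}" using finI by simp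
    show "{V. V \<subseteq> {j\<in>S. even (d j)} \<and> even (card V)} \<subseteq> {V. V \<subseteq> {j\<in>I. even (d j)} \<and> even (card V)}"
      using SI by auto
    show "\<forall>V\<in>{V. V \<subseteq> {j\<in>I. even (d j)} \<and> even (card V)} - {V. V \<subseteq> {j\<in>S. even (d j)} \<and> even (card V)}.
            (\<Prod>j\<in>V. quad_char (a j) * quad_char (c j)) = 0"
    proof
      fix V assume V: "V \<in> {V. V \<subseteq> {j\<in>I. even (d j)} \<and> even (card V)} - {V. V \<subseteq> {j\<in>S. even (d j)} \<and> even (card V)}"
      then obtain j where "j \<in> V" "c j = 0" by (auto simp: S_def)
      moreover have "finite V" using V finI by (auto intro: finite_subset)
      ultimately show "(\<Prod>j\<in>V. quad_char (a j) * quad_char (c j)) = 0"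
        by (intro prod_zero) (auto intro!: bexI[of _ j])
    qed
    fix V assume V: "V \<in> {V. V \<subseteq> {j\<in>S. even (d j)} \<and> even (card V)}"
    show "(\<Prod>j\<in>V. (-1::int)^(u j)) = (\<Prod>j\<in>V. quad_char (a j) * quad_char (c j))"
    proof (rule prod.cong[OF refl])
      fix j assume "j \<in> V"
      then have j: "j \<in> S" "even (d j)" using V by auto
      have aj: "a j \<noteq> 0" and cj: "c j \<noteq> 0" using j a_nz SI by (auto simp: S_def)
      have evN: "even (card (UNIV::'a set) - 1)"
      proof -
        have "d j dvd N" by (simp add: d_def)
        then have "2 dvd N" using j(2) dvd_trans by blast
        then show ?thesis by (simp add: N_def)
      qed
      have "even (u j + ind (c j)) = even (ind (a j) + d j * ind (c j))"
      proof -
        have "ind (c j) \<le> d j * ind (c j)" using dpos j(1) by (simp add: Suc_leI)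
        then have "u j + ind (c j) = ind (a j) + d j * ind (c j)" unfolding u_def by linarith
        then show ?thesis by simp
      qed
      then have "even (u j) = (even (ind (a j)) = even (ind (c j)))" using j(2) by auto
      then have "(-1::int) ^ u j = (-1) ^ ind (a j) * (-1) ^ ind (c j)"
        by (cases "even (ind (a j))"; cases "even (ind (c j))"; cases "even (u j)") auto
      then show "(-1::int) ^ u j = quad_char (a j) * quad_char (c j)"
        using qc_ind[OF evN aj] qc_ind[OF evN cj] by simp
    qed
  qed
  finally show ?thesis by (simp add: N_def d_def)
qed

end

context ffg
begin

lemma count_D:
  fixes a :: "nat \<Rightarrow> 'a" and m :: "nat \<Rightarrow> nat"
  assumes finI: "finite I" and a_nz: "\<forall>j\<in>I. a j \<noteq> 0" and m_pos: "\<forall>j\<in>I. 0 < m j"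
    and cop: "\<forall>i\<in>I. \<forall>j\<in>I. i \<noteq> j \<longrightarrow> coprime (ee (\<lambda>j. gcd (m j) (card (UNIV::'a set) - 1)) i) (ee (\<lambda>j. gcd (m j) (card (UNIV::'a set) - 1)) j)"
    and D: "D = UNIV \<or> D = UNIV - {0::'a}"
  shows "int (card {x\<in>PiE I (\<lambda>_. D). (\<Sum>j\<in>I. a j * x j ^ m j) = 0})
       = (\<Sum>V\<in>{V. V \<subseteq> {j\<in>I. even (gcd (m j) (card (UNIV::'a set) - 1))} \<and> even (card V)}.
            (\<Prod>j\<in>V. quad_char (a j)) * cv I D (\<lambda>j. if j \<in> V then quad_char else (\<lambda>_. 1)) 0)"
proof -
  define N where "N = card (UNIV::'a set) - 1"
  define C where "C = {c\<in>PiE I (\<lambda>_. D). (\<Sum>j\<in>I. c j) = 0}"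
  define Vs where "Vs = {V. V \<subseteq> {j\<in>I. even (gcd (m j) N)} \<and> even (card V)}"
  define F where "F c = (\<Prod>j\<in>I. int (card {x. a j * x ^ m j = c j}))" for c :: "nat \<Rightarrow> 'a"
  define W where "W c = (\<Sum>V\<in>Vs. \<Prod>j\<in>V. quad_char (a j) * quad_char (c j))" for c :: "nat \<Rightarrow> 'a"
  have maps: "\<forall>j\<in>I. \<forall>x\<in>D. a j * x ^ m j \<in> D" using a_nz D by auto
  have "card {x\<in>PiE I (\<lambda>_. D). (\<Sum>j\<in>I. a j * x j ^ m j) = 0}
      = (\<Sum>c\<in>C. \<Prod>j\<in>I. card {x\<in>D. a j * x ^ m j = c j})"
    unfolding C_def by (rule fiber_count[OF finI maps])
  also have "\<dots> = (\<Sum>c\<in>C. \<Prod>j\<in>I. card {x. a j * x ^ m j = c j})"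
  proof (rule sum.cong[OF refl], rule prod.cong[OF refl])
    fix c j assume c: "c \<in> C" and j: "j \<in> I"
    show "card {x\<in>D. a j * x ^ m j = c j} = card {x. a j * x ^ m j = c j}"
    proof (cases "D = UNIV")
      case True then show ?thesis by simp
    next
      case False
      then have "D = UNIV - {0}" using D by simp
      moreover have "c j \<noteq> 0" using c j calculation by (auto simp: C_def)
      moreover have "0 < m j" using m_pos j by simp
      ultimately have "{x\<in>D. a j * x ^ m j = c j} = {x. a j * x ^ m j = c j}" by (auto simp: power_0_left)
      then show ?thesis by simp
    qed
  qed
  finally have c1: "int (card {x\<in>PiE I (\<lambda>_. D). (\<Sum>j\<in>I. a j * x j ^ m j) = 0}) = (\<Sum>c\<in>C. F c)"
    by (simp add: F_def)
  have "int N * (\<Sum>c\<in>C. F c) = (\<Sum>c\<in>C. \<Sum>s<N. F (restrict (\<lambda>j. g ^ s * c j) I))"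
    unfolding C_def N_def by (rule avg[OF finI D])
  also have "\<dots> = (\<Sum>c\<in>C. int N * W c)"
  proof (rule sum.cong[OF refl])
    fix c assume "c \<in> C"
    have "(\<Sum>s<N. F (restrict (\<lambda>j. g ^ s * c j) I)) = (\<Sum>s<N. \<Prod>j\<in>I. int (card {x. a j * x ^ m j = g ^ s * c j}))"
      by (simp add: F_def)
    also have "\<dots> = int N * W c"
      unfolding N_def W_def Vs_def by (rule perc[OF finI a_nz m_pos cop])
    finally show "(\<Sum>s<N. F (restrict (\<lambda>j. g ^ s * c j) I)) = int N * W c" .
  qed
  finally have "int N * (\<Sum>c\<in>C. F c) = int N * (\<Sum>c\<in>C. W c)" by (simp add: sum_distrib_left)
  then have c2: "(\<Sum>c\<in>C. F c) = (\<Sum>c\<in>C. W c)" using NN_pos by (simp add: N_def)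
  have "(\<Sum>c\<in>C. W c) = (\<Sum>V\<in>Vs. \<Sum>c\<in>C. \<Prod>j\<in>V. quad_char (a j) * quad_char (c j))"
    unfolding W_def by (rule sum.swap)
  also have "\<dots> = (\<Sum>V\<in>Vs. (\<Prod>j\<in>V. quad_char (a j)) * cv I D (\<lambda>j. if j \<in> V then quad_char else (\<lambda>_. 1)) 0)"
  proof (rule sum.cong[OF refl])
    fix V assume V: "V \<in> Vs"
    then have VI: "V \<subseteq> I" by (auto simp: Vs_def)
    have "(\<Sum>c\<in>C. \<Prod>j\<in>V. quad_char (a j) * quad_char (c j)) = (\<Prod>j\<in>V. quad_char (a j)) * (\<Sum>c\<in>C. \<Prod>j\<in>V. quad_char (c j))"
      by (simp add: prod.distrib sum_distrib_left)
    also have "(\<Sum>c\<in>C. \<Prod>j\<in>V. quad_char (c j)) = cv I D (\<lambda>j. if j \<in> V then quad_char else (\<lambda>_. 1)) 0"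
      unfolding cv_def C_def
    proof (rule sum.cong[OF refl])
      fix c
      show "(\<Prod>j\<in>V. quad_char (c j)) = (\<Prod>j\<in>I. (if j \<in> V then quad_char else (\<lambda>_. 1)) (c j))"
        by (rule prod.mono_neutral_cong_left[OF finI VI]) auto
    qed
    finally show "(\<Sum>c\<in>C. \<Prod>j\<in>V. quad_char (a j) * quad_char (c j)) = (\<Prod>j\<in>V. quad_char (a j)) * cv I D (\<lambda>j. if j \<in> V then quad_char else (\<lambda>_. 1)) 0" .
  qed
  finally show ?thesis using c1 c2 by (simp add: Vs_def N_def)
qed

lemma cv_pick:
  fixes w :: 'a
  assumes finI: "finite I" and i: "i \<in> I" "i \<notin> V"
  shows "cv I UNIV (\<lambda>j. if j \<in> V then quad_char else (\<lambda>_. 1)) w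
       = (\<Prod>j\<in>I - {i}. \<Sum>x\<in>(UNIV::'a set). (if j \<in> V then quad_char else (\<lambda>_. 1)) x)"
proof -
  have I: "I = insert i (I - {i})" using i by auto
  have "cv I UNIV (\<lambda>j. if j \<in> V then quad_char else (\<lambda>_. 1)) w
      = (\<Sum>y\<in>(UNIV::'a set). cv (I - {i}) UNIV (\<lambda>j. if j \<in> V then quad_char else (\<lambda>_. 1)) (w - y))"
    using cv_insert[of "I - {i}" i UNIV "\<lambda>j. if j \<in> V then quad_char else (\<lambda>_. 1)" w] finI i
    by (simp add: insert_absorb[OF i(1)])
  also have "\<dots> = (\<Sum>z\<in>(UNIV::'a set). cv (I - {i}) UNIV (\<lambda>j. if j \<in> V then quad_char else (\<lambda>_. 1)) z)"
    by (rule sum_neg_UNIV)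
  also have "\<dots> = (\<Prod>j\<in>I - {i}. \<Sum>x\<in>(UNIV::'a set). (if j \<in> V then quad_char else (\<lambda>_. 1)) x)"
    using finI by (simp add: cv_total)
  finally show ?thesis .
qed

lemma cvF_empty:
  assumes finI: "finite I" and ne: "I \<noteq> {}"
  shows "cv I UNIV (\<lambda>j. if j \<in> {} then quad_char else (\<lambda>_. 1)) (0::'a) = int (card (UNIV::'a set)) ^ (card I - 1)"
proof -
  obtain i where i: "i \<in> I" using ne by blast
  have "cv I UNIV (\<lambda>j. if j \<in> {} then quad_char else (\<lambda>_. 1)) (0::'a) = (\<Prod>j\<in>I - {i}. int (card (UNIV::'a set)))"
    using cv_pick[OF finI i, of "{}" 0] by simp
  then show ?thesis using finI i by (simp add: card_Diff_singleton)
qed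

lemma cvF_mid:
  assumes finI: "finite I" and ev: "even (card (UNIV::'a set) - 1)"
    and V: "V \<subseteq> I" "V \<noteq> {}" "V \<noteq> I"
  shows "cv I UNIV (\<lambda>j. if j \<in> V then quad_char else (\<lambda>_. 1)) (0::'a) = 0"
proof -
  obtain i where i: "i \<in> I" "i \<notin> V" using V by blast
  obtain j where j: "j \<in> V" using V by blast
  have "(\<Prod>j\<in>I - {i}. \<Sum>x\<in>(UNIV::'a set). (if j \<in> V then quad_char else (\<lambda>_. 1)) x) = 0"
  proof (rule prod_zero)
    show "finite (I - {i})" using finI by simp
    show "\<exists>j\<in>I - {i}. (\<Sum>x\<in>(UNIV::'a set). (if j \<in> V then quad_char else (\<lambda>_. 1)) x) = 0"
      using j i V qc_sum[OF ev] by (intro bexI[of _ j]) auto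
  qed
  then show ?thesis using cv_pick[OF finI i, of 0] by simp
qed

end

lemma card_swap:
  assumes "finite L" "finite X"
  shows "(\<Sum>l\<in>L. card {x\<in>X. R l x}) = (\<Sum>x\<in>X. card {l\<in>L. R l x})"
proof -
  have "(\<Sum>l\<in>L. card {x\<in>X. R l x}) = (\<Sum>l\<in>L. \<Sum>x\<in>X. if R l x then 1 else (0::nat))"
    using assms by (simp add: sum.inter_filter[symmetric])
  also have "\<dots> = (\<Sum>x\<in>X. \<Sum>l\<in>L. if R l x then 1 else (0::nat))" by (rule sum.swap)
  also have "\<dots> = (\<Sum>x\<in>X. card {l\<in>L. R l x})"
    using assms by (simp add: sum.inter_filter[symmetric])
  finally show ?thesis .
qed

context ffg
begin

lemma ratio:
  fixes a :: "nat \<Rightarrow> 'a" and m kk :: "nat \<Rightarrow> nat" and k M :: nat and b :: 'a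
  assumes finI: "finite I" and mdvd: "\<forall>j\<in>I. m j dvd M" and m_pos: "\<forall>j\<in>I. 0 < m j"
    and b: "b \<noteq> 0"
    and cop: "gcd ((\<Sum>j\<in>I. int (kk j * M div m j)) - int (k * M)) (int (card (UNIV::'a set)) - 1) = 1"
  defines "X \<equiv> {x\<in>PiE I (\<lambda>_. UNIV - {0::'a}). (\<Sum>j\<in>I. a j * x j ^ m j) \<noteq> 0}"
  shows "card X = (card (UNIV::'a set) - 1) * card {x\<in>X. (\<Sum>j\<in>I. a j * x j ^ m j) ^ k = b * (\<Prod>j\<in>I. x j ^ kk j)}"
proof -
  define s where "s x = (\<Sum>j\<in>I. a j * x j ^ m j)" for x :: "nat \<Rightarrow> 'a"
  define P where "P x = (\<Prod>j\<in>I. x j ^ kk j)" for x :: "nat \<Rightarrow> 'a"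
  define act where "act l x = restrict (\<lambda>j. l ^ (M div m j) * x j) I" for l :: 'a and x :: "nat \<Rightarrow> 'a"
  define A where "A = (\<Sum>j\<in>I. kk j * (M div m j))"
  define B where "B = k * M"
  define Y where "Y = {x\<in>X. s x ^ k = b * P x}"
  define GG where "GG = UNIV - {0::'a}"
  have f1: "s (act l x) = l ^ M * s x" for l x
  proof -
    have "s (act l x) = (\<Sum>j\<in>I. l ^ M * (a j * x j ^ m j))"
      unfolding s_def
    proof (rule sum.cong[OF refl])
      fix j assume j: "j \<in> I"
      have "(l ^ (M div m j)) ^ m j = l ^ M"
        using mdvd j by (metis power_mult dvd_div_mult_self)
      then show "a j * act l x j ^ m j = l ^ M * (a j * x j ^ m j)"
        using j by (simp add: act_def power_mult_distrib)
    qed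
    then show ?thesis by (simp add: s_def sum_distrib_left)
  qed
  have f2: "P (act l x) = l ^ A * P x" for l x
  proof -
    have "P (act l x) = (\<Prod>j\<in>I. l ^ (kk j * (M div m j)) * x j ^ kk j)"
      unfolding P_def
    proof (rule prod.cong[OF refl])
      fix j assume j: "j \<in> I"
      have "(l ^ (M div m j)) ^ kk j = l ^ (kk j * (M div m j))" by (metis power_mult mult.commute)
      then show "act l x j ^ kk j = l ^ (kk j * (M div m j)) * x j ^ kk j"
        using j by (simp add: act_def power_mult_distrib)
    qed
    also have "\<dots> = l ^ A * P x" by (simp add: prod.distrib P_def A_def power_sum)
    finally show ?thesis .
  qed
  have f3: "act l x \<in> X" if "l \<noteq> 0" "x \<in> X" for l x
    using that f1[of l x] by (auto simp: X_def act_def s_def[symmetric] PiE_def Pi_def extensional_def)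
  have f4: "act (inverse l) (act l x) = x" if "l \<noteq> 0" "x \<in> X" for l x
  proof
    fix j show "act (inverse l) (act l x) j = x j"
      using that by (cases "j \<in> I") (auto simp: act_def X_def PiE_def extensional_def power_inverse field_simps)
  qed
  have Pnz: "P x \<noteq> 0" if "x \<in> X" for x
    using that finI by (auto simp: P_def X_def PiE_def Pi_def)
  have snz: "s x \<noteq> 0" if "x \<in> X" for x using that by (simp add: X_def s_def)
  have A_int: "int A = (\<Sum>j\<in>I. int (kk j * M div m j))"
    unfolding A_def of_nat_sum using mdvd by (intro sum.cong refl) (simp add: div_mult_swap)
  have one: "card {l\<in>GG. act l x \<in> Y} = 1" if x: "x \<in> X" for x
  proof -
    have "{l\<in>GG. act l x \<in> Y} = {l\<in>GG. l ^ B * s x ^ k = l ^ A * (b * P x)}"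
    proof (intro Collect_cong conj_cong refl)
      fix l assume "l \<in> GG"
      then have l: "l \<noteq> 0" by (simp add: GG_def)
      have "act l x \<in> Y \<longleftrightarrow> s (act l x) ^ k = b * P (act l x)" using f3[OF l x] by (simp add: Y_def)
      also have "\<dots> \<longleftrightarrow> l ^ B * s x ^ k = l ^ A * (b * P x)"
        by (simp add: f1 f2 B_def power_mult_distrib power_mult mult.commute mult.left_commute)
      finally show "act l x \<in> Y \<longleftrightarrow> l ^ B * s x ^ k = l ^ A * (b * P x)" .
    qed
    also have "card \<dots> = 1" unfolding GG_def
    proof (rule unique_lambda)
      show "s x ^ k \<noteq> 0" using snz[OF x] by simp
      show "b * P x \<noteq> 0" using b Pnz[OF x] by simp
      show "gcd (int A - int B) (int (card (UNIV::'a set) - 1)) = 1"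
        using cop A_int q_ge2 by (simp add: B_def of_nat_diff)
    qed
    finally show ?thesis .
  qed
  have each: "card {x\<in>X. act l x \<in> Y} = card Y" if l: "l \<in> GG" for l
  proof -
    have l0: "l \<noteq> 0" using l by (simp add: GG_def)
    have "bij_betw (act l) {x\<in>X. act l x \<in> Y} Y"
    proof (rule bij_betwI[of _ _ _ "act (inverse l)"])
      show "act l \<in> {x\<in>X. act l x \<in> Y} \<rightarrow> Y" by auto
      show "act (inverse l) \<in> Y \<rightarrow> {x\<in>X. act l x \<in> Y}"
      proof
        fix y assume y: "y \<in> Y"
        then have yX: "y \<in> X" by (simp add: Y_def)
        have "act l (act (inverse l) y) = y" using f4[of "inverse l" y] l0 yX by simp
        then show "act (inverse l) y \<in> {x\<in>X. act l x \<in> Y}" using f3[of "inverse l" y] l0 yX y by simp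
      qed
      show "act (inverse l) (act l x) = x" if "x \<in> {x\<in>X. act l x \<in> Y}" for x
        using f4 l0 that by simp
      show "act l (act (inverse l) y) = y" if "y \<in> Y" for y
        using f4[of "inverse l" y] l0 that by (simp add: Y_def)
    qed
    then show ?thesis by (rule bij_betw_same_card)
  qed
  have finX: "finite X" unfolding X_def
    by (rule finite_subset[of _ "PiE I (\<lambda>_. UNIV - {0::'a})"]) (auto simp: finite_PiE finI)
  have "card X = (\<Sum>x\<in>X. card {l\<in>GG. act l x \<in> Y})" using one by simp
  also have "\<dots> = (\<Sum>l\<in>GG. card {x\<in>X. act l x \<in> Y})" by (rule card_swap[symmetric]) (auto simp: finX)
  also have "\<dots> = (\<Sum>l\<in>GG. card Y)" using each by simp
  also have "\<dots> = (card (UNIV::'a set) - 1) * card Y" by (simp add: GG_def card_GG)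
  finally show ?thesis by (simp add: Y_def s_def P_def)
qed

end

lemma split_count:
  fixes a :: "nat \<Rightarrow> 'a::{finite,field}" and m kk :: "nat \<Rightarrow> nat" and b :: 'a
  assumes finI: "finite I" and kk_pos: "\<forall>j\<in>I. 0 < kk j" and k: "0 < k" and b: "b \<noteq> 0"
  defines "Z \<equiv> {x\<in>PiE I (\<lambda>_. UNIV). (\<Sum>j\<in>I. a j * x j ^ m j) = 0}"
    and "Zs \<equiv> {x\<in>PiE I (\<lambda>_. UNIV - {0}). (\<Sum>j\<in>I. a j * x j ^ m j) = 0}"
    and "X \<equiv> {x\<in>PiE I (\<lambda>_. UNIV - {0}). (\<Sum>j\<in>I. a j * x j ^ m j) \<noteq> 0}"
  shows "int (card {x\<in>PiE I (\<lambda>_. UNIV). (\<Sum>j\<in>I. a j * x j ^ m j) ^ k = b * (\<Prod>j\<in>I. x j ^ kk j)})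
         = int (card Z) - int (card Zs) + int (card {x\<in>X. (\<Sum>j\<in>I. a j * x j ^ m j) ^ k = b * (\<Prod>j\<in>I. x j ^ kk j)})"
    and "int (card X) = int (card (UNIV::'a set) - 1) ^ card I - int (card Zs)"
proof -
  define s where "s x = (\<Sum>j\<in>I. a j * x j ^ m j)" for x :: "nat \<Rightarrow> 'a"
  define P where "P x = (\<Prod>j\<in>I. x j ^ kk j)" for x :: "nat \<Rightarrow> 'a"
  define T where "T = {x\<in>PiE I (\<lambda>_. UNIV). s x ^ k = b * P x}"
  define T0 where "T0 = {x\<in>PiE I (\<lambda>_. UNIV). s x = 0 \<and> (\<exists>j\<in>I. x j = 0)}"
  define Y where "Y = {x\<in>X. s x ^ k = b * P x}"
  have fin: "finite (PiE I (\<lambda>_. UNIV::'a set))" "finite (PiE I (\<lambda>_. UNIV - {0::'a}))"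
    using finI by (auto simp: finite_PiE)
  have GGsub: "PiE I (\<lambda>_. UNIV - {0::'a}) \<subseteq> PiE I (\<lambda>_. UNIV)" by (auto simp: PiE_def Pi_def)
  have P0: "P x = 0 \<longleftrightarrow> (\<exists>j\<in>I. x j = 0)" for x
    using finI kk_pos by (auto simp: P_def)
  have T: "T = T0 \<union> Y"
  proof (intro equalityI subsetI)
    fix x assume x: "x \<in> T"
    show "x \<in> T0 \<union> Y"
    proof (cases "\<exists>j\<in>I. x j = 0")
      case True
      then have "s x ^ k = 0" using x P0 by (auto simp: T_def)
      then have "s x = 0" by simp
      then show ?thesis using True x by (auto simp: T_def T0_def)
    next
      case False
      then have "P x \<noteq> 0" using P0 by simp
      then have "s x \<noteq> 0" using x b k by (auto simp: T_def zero_power)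
      moreover have "x \<in> PiE I (\<lambda>_. UNIV - {0})" using x False by (auto simp: T_def PiE_def Pi_def)
      ultimately show ?thesis using x by (auto simp: Y_def X_def T_def s_def)
    qed
  next
    fix x assume "x \<in> T0 \<union> Y"
    then show "x \<in> T"
    proof
      assume x: "x \<in> T0"
      then have "P x = 0" "s x = 0" using P0 by (auto simp: T0_def)
      then show ?thesis using x k by (auto simp: T_def T0_def zero_power)
    next
      assume "x \<in> Y" then show ?thesis using GGsub by (auto simp: Y_def X_def T_def s_def)
    qed
  qed
  have dis1: "T0 \<inter> Y = {}" by (auto simp: T0_def Y_def X_def PiE_def Pi_def)
  have cT: "card T = card T0 + card Y"
    unfolding T using fin dis1 by (intro card_Un_disjoint) (auto simp: T0_def Y_def X_def intro: finite_subset)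
  have Z: "Z = T0 \<union> Zs"
    using GGsub by (auto simp: Z_def T0_def Zs_def s_def PiE_def Pi_def)
  have dis2: "T0 \<inter> Zs = {}" by (auto simp: T0_def Zs_def PiE_def Pi_def)
  have cZ: "card Z = card T0 + card Zs"
    unfolding Z using fin dis2 by (intro card_Un_disjoint) (auto simp: T0_def Zs_def intro: finite_subset)
  show "int (card {x\<in>PiE I (\<lambda>_. UNIV). (\<Sum>j\<in>I. a j * x j ^ m j) ^ k = b * (\<Prod>j\<in>I. x j ^ kk j)})
         = int (card Z) - int (card Zs) + int (card {x\<in>X. (\<Sum>j\<in>I. a j * x j ^ m j) ^ k = b * (\<Prod>j\<in>I. x j ^ kk j)})"
    using cT cZ by (simp add: T_def Y_def s_def P_def)
  have G: "PiE I (\<lambda>_. UNIV - {0::'a}) = X \<union> Zs" by (auto simp: X_def Zs_def)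
  have dis3: "X \<inter> Zs = {}" by (auto simp: X_def Zs_def)
  have "card (PiE I (\<lambda>_. UNIV - {0::'a})) = card X + card Zs"
    unfolding G using fin dis3 by (intro card_Un_disjoint) (auto simp: X_def Zs_def intro: finite_subset)
  moreover have "card (PiE I (\<lambda>_. UNIV - {0::'a})) = (card (UNIV::'a set) - 1) ^ card I"
    using finI by (simp add: card_PiE card_Diff_singleton)
  ultimately show "int (card X) = int (card (UNIV::'a set) - 1) ^ card I - int (card Zs)"
    by (metis add_diff_cancel_right' of_nat_add of_nat_power)
qed


context ffg
begin

lemma qc_one: "quad_char (1::'a) = 1"
  by (simp add: quad_char_def) (metis power_one)

lemma qc_power: "even (card (UNIV::'a set) - 1) \<Longrightarrow> quad_char ((x::'a) ^ j) = quad_char x ^ j"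
  by (induction j) (simp_all add: qc_one qc_mult)

lemma qc_prod:
  assumes ev: "even (card (UNIV::'a set) - 1)" and fin: "finite A"
  shows "quad_char (\<Prod>j\<in>A. (f j::'a)) = (\<Prod>j\<in>A. quad_char (f j))"
  using fin by (induction A rule: finite_induct) (simp_all add: qc_one qc_mult[OF ev])

lemma KF_zero: "KF 0 r 0 = (int (card (UNIV::'a set)) - 1) ^ r - (-1) ^ r + int (card (UNIV::'a set)) * (-1) ^ r"
  by (simp add: KF_def Let_def)

lemma KF_even: "0 < v \<Longrightarrow> even v \<Longrightarrow> KF v r 0 = (-1) ^ r * quad_char (-1::'a) ^ (v div 2) * int (card (UNIV::'a set)) ^ (v div 2) * (int (card (UNIV::'a set)) - 1)"
  by (simp add: KF_def Let_def)

lemma R_group: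
  fixes a :: "nat \<Rightarrow> 'a"
  assumes finE: "finite E" and ev: "E \<noteq> {} \<Longrightarrow> even (card (UNIV::'a set) - 1)"
  shows "(\<Sum>V\<in>{V. V \<subseteq> E \<and> even (card V)} - {{}}. (\<Prod>j\<in>V. quad_char (a j)) * quad_char (-1::'a) ^ (card V div 2) * int (card (UNIV::'a set)) ^ (card V div 2))
       = (\<Sum>j=1..card E div 2. quad_char ((-1::'a) ^ j) * esym E (\<lambda>i. quad_char (a i)) (2 * j) * int (card (UNIV::'a set)) ^ j)"
proof -
  define Rs where "Rs = {V. V \<subseteq> E \<and> even (card V)} - {{}}"
  define h where "h V = (\<Prod>j\<in>V. quad_char (a j)) * quad_char (-1::'a) ^ (card V div 2) * int (card (UNIV::'a set)) ^ (card V div 2)" for V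
  have finRs: "finite Rs" using finE by (simp add: Rs_def)
  have img: "(\<lambda>V. card V div 2) ` Rs \<subseteq> {1..card E div 2}"
  proof
    fix j assume "j \<in> (\<lambda>V. card V div 2) ` Rs"
    then obtain V where V: "V \<subseteq> E" "even (card V)" "V \<noteq> {}" "j = card V div 2" by (auto simp: Rs_def)
    have "finite V" using V finE finite_subset by blast
    then have "card V > 0" using V by (simp add: card_gt_0_iff)
    then have "card V \<ge> 2" using V(2) by presburger
    moreover have "card V \<le> card E" using V finE by (simp add: card_mono)
    ultimately show "j \<in> {1..card E div 2}" using V(4) by (auto intro: div_le_mono)
  qed
  have "(\<Sum>V\<in>Rs. h V) = (\<Sum>j=1..card E div 2. \<Sum>V\<in>{V\<in>Rs. card V div 2 = j}. h V)"
    using sum.group[OF finRs _ img, of h] by simp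
  also have "\<dots> = (\<Sum>j=1..card E div 2. quad_char ((-1::'a) ^ j) * esym E (\<lambda>i. quad_char (a i)) (2 * j) * int (card (UNIV::'a set)) ^ j)"
  proof (rule sum.cong[OF refl])
    fix j assume j: "j \<in> {1..card E div 2}"
    then have "E \<noteq> {}" by auto
    then have evN: "even (card (UNIV::'a set) - 1)" by (rule ev)
    have set: "{V\<in>Rs. card V div 2 = j} = {V. V \<subseteq> E \<and> card V = 2 * j}"
    proof (intro equalityI subsetI)
      fix V assume "V \<in> {V\<in>Rs. card V div 2 = j}"
      then show "V \<in> {V. V \<subseteq> E \<and> card V = 2 * j}" by (auto simp: Rs_def elim!: evenE)
    next
      fix V assume V: "V \<in> {V. V \<subseteq> E \<and> card V = 2 * j}"
      then have "V \<noteq> {}" using j by auto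
      then show "V \<in> {V\<in>Rs. card V div 2 = j}" using V by (auto simp: Rs_def)
    qed
    have "(\<Sum>V\<in>{V\<in>Rs. card V div 2 = j}. h V) = (\<Sum>V\<in>{V. V \<subseteq> E \<and> card V = 2 * j}. (\<Prod>i\<in>V. quad_char (a i)) * (quad_char (-1::'a) ^ j * int (card (UNIV::'a set)) ^ j))"
      unfolding set by (rule sum.cong[OF refl]) (simp add: h_def)
    also have "\<dots> = quad_char ((-1::'a) ^ j) * esym E (\<lambda>i. quad_char (a i)) (2 * j) * int (card (UNIV::'a set)) ^ j"
      by (simp add: esym_def sum_distrib_left qc_power[OF evN] mult_ac)
    finally show "(\<Sum>V\<in>{V\<in>Rs. card V div 2 = j}. h V) = quad_char ((-1::'a) ^ j) * esym E (\<lambda>i. quad_char (a i)) (2 * j) * int (card (UNIV::'a set)) ^ j" .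
  qed
  finally show ?thesis by (simp add: Rs_def h_def)
qed

end

theorem theorem4:
  fixes a :: "nat \<Rightarrow> 'a::{finite,field}" and b :: 'a
    and m kk :: "nat \<Rightarrow> nat" and k n t :: nat
  defines "q \<equiv> card (UNIV :: 'a set)"
  defines "M \<equiv> Lcm (m ` {1..n})"
  defines "d \<equiv> (\<lambda>j. gcd (m j) (q - 1))"
  assumes n2: "n \<ge> 2"
    and a_nz: "\<forall>j\<in>{1..n}. a j \<noteq> 0"
    and b_nz: "b \<noteq> 0"
    and m_pos: "\<forall>j\<in>{1..n}. m j > 0"
    and kk_pos: "\<forall>j\<in>{1..n}. kk j > 0"
    and k_pos: "k > 0"
    and t_le: "t \<le> n"
    and d_odd: "\<forall>j\<in>{1..t}. odd (d j)"
    and d_even: "\<forall>j\<in>{t+1..n}. even (d j)"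
    and d_coprime: "\<forall>i\<in>{1..n}. \<forall>j\<in>{1..n}. i \<noteq> j \<longrightarrow>
        coprime (if i \<le> t then d i else d i div 2) (if j \<le> t then d j else d j div 2)"
    and gcd_cond: "gcd ((\<Sum>j=1..n. int (kk j * M div m j)) - int (k * M)) (int q - 1) = 1"
  shows "int (card {x \<in> {1..n} \<rightarrow>\<^sub>E (UNIV :: 'a set).
            (\<Sum>j=1..n. a j * x j ^ m j) ^ k = b * (\<Prod>j=1..n. x j ^ kk j)})
       = int q ^ (n - 1) + (-1) ^ (n - 1)
         + (-1) ^ (n - 1) * (\<Sum>j=1..(n - t) div 2.
              quad_char ((-1 :: 'a) ^ j) * esym {t+1..n} (\<lambda>i. quad_char (a i)) (2 * j) * int q ^ j)
         + (if t = 0 \<and> even n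
            then quad_char ((-1 :: 'a) ^ (n div 2) * (\<Prod>j=1..n. a j)) * int q ^ ((n - 2) div 2) * (int q - 1)
            else 0)"
proof -
  obtain g :: 'a where g: "g \<noteq> 0" "\<forall>x. x \<noteq> 0 \<longrightarrow> (\<exists>i. x = g ^ i)" using gen_exists by blast
  interpret G: ffg g using g by unfold_locales auto
  define I where "I = {1..n}"
  have finI: "finite I" and cardI: "card I = n" and In: "I \<noteq> {}" using n2 by (auto simp: I_def)
  define E where "E = {t+1..n}"
  define N where "N = card (UNIV::'a set) - 1"
  have dI: "d = (\<lambda>j. gcd (m j) N)" by (simp add: d_def q_def N_def)
  have E_eq: "{j\<in>I. even (gcd (m j) N)} = E"
  proof (intro equalityI subsetI)
    fix j assume "j \<in> {j\<in>I. even (gcd (m j) N)}"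
    then have j: "j \<in> I" "even (d j)" by (auto simp: dI)
    have "\<not> j \<le> t" using j d_odd by (auto simp: I_def)
    then show "j \<in> E" using j by (auto simp: I_def E_def)
  next
    fix j assume j: "j \<in> E"
    then have "even (d j)" using d_even by (auto simp: E_def)
    then show "j \<in> {j\<in>I. even (gcd (m j) N)}" using j by (auto simp: I_def E_def dI)
  qed
  have EI: "E \<subseteq> I" by (auto simp: E_def I_def)
  have finE: "finite E" by (simp add: E_def)
  have cardE: "card E = n - t" by (simp add: E_def)
  have evN: "even N" if ne: "E \<noteq> {}"
  proof -
    obtain j where "j \<in> E" using ne by blast
    then have "even (d j)" using d_even by (auto simp: E_def)
    moreover have "d j dvd N" by (simp add: dI)
    ultimately show ?thesis by (auto elim: dvd_trans)
  qed
  have cop': "\<forall>i\<in>I. \<forall>j\<in>I. i \<noteq> j \<longrightarrow> coprime (ee (\<lambda>j. gcd (m j) (card (UNIV::'a set) - 1)) i) (ee (\<lambda>j. gcd (m j) (card (UNIV::'a set) - 1)) j)"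
  proof -
    have eeq: "ee (\<lambda>j. gcd (m j) (card (UNIV::'a set) - 1)) j = (if j \<le> t then d j else d j div 2)" if "j \<in> I" for j
    proof (cases "j \<le> t")
      case True
      then have "odd (d j)" using d_odd that by (auto simp: I_def)
      then have od: "\<not> even (gcd (m j) (card (UNIV::'a set) - 1))" unfolding dI N_def by blast
      show ?thesis by (simp only: ee_def if_not_P[OF od] if_P[OF True] dI N_def)
    next
      case False
      then have "even (d j)" using d_even that by (auto simp: I_def)
      then have ev: "even (gcd (m j) (card (UNIV::'a set) - 1))" unfolding dI N_def by blast
      show ?thesis by (simp only: ee_def if_P[OF ev] if_not_P[OF False] dI N_def)
    qed
    show ?thesis using d_coprime eeq by (simp add: I_def)
  qed
  have a_nz': "\<forall>j\<in>I. a j \<noteq> 0" and m_pos': "\<forall>j\<in>I. 0 < m j" and kk_pos': "\<forall>j\<in>I. 0 < kk j"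
    using a_nz m_pos kk_pos by (auto simp: I_def)
  define Vs where "Vs = {V. V \<subseteq> E \<and> even (card V)}"
  define Rs where "Rs = Vs - {{}}"
  define \<phi> where "\<phi> V = (\<lambda>j::nat. if j \<in> V then quad_char else (\<lambda>_::'a. 1::int))" for V :: "nat set"
  define Q where "Q = int (card (UNIV::'a set))"
  define e where "e = quad_char (-1::'a)"
  define ZA where "ZA = {x\<in>PiE I (\<lambda>_. UNIV). (\<Sum>j\<in>I. a j * x j ^ m j) = (0::'a)}"
  define ZS where "ZS = {x\<in>PiE I (\<lambda>_. UNIV - {0}). (\<Sum>j\<in>I. a j * x j ^ m j) = (0::'a)}"
  define X where "X = {x\<in>PiE I (\<lambda>_. UNIV - {0}). (\<Sum>j\<in>I. a j * x j ^ m j) \<noteq> (0::'a)}"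
  define Y where "Y = {x\<in>X. (\<Sum>j\<in>I. a j * x j ^ m j) ^ k = b * (\<Prod>j\<in>I. x j ^ kk j)}"
  define T where "T = {x\<in>PiE I (\<lambda>_. UNIV). (\<Sum>j\<in>I. a j * x j ^ m j) ^ k = b * (\<Prod>j\<in>I. x j ^ kk j)}"
  have finVs: "finite Vs" using finE by (simp add: Vs_def)
  have emp: "{} \<in> Vs" by (simp add: Vs_def)
  have Q2: "Q \<ge> 2" using G.q_ge2 by (simp add: Q_def)
  have NQ: "int N = Q - 1" using G.q_ge2 by (simp add: N_def Q_def of_nat_diff)
  have cZA: "int (card ZA) = (\<Sum>V\<in>Vs. (\<Prod>j\<in>V. quad_char (a j)) * cv I UNIV (\<phi> V) 0)"
    using G.count_D[OF finI a_nz' m_pos' cop', of UNIV] E_eq by (simp add: ZA_def Vs_def \<phi>_def N_def)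
  have cZS: "int (card ZS) = (\<Sum>V\<in>Vs. (\<Prod>j\<in>V. quad_char (a j)) * cv I (UNIV - {0}) (\<phi> V) 0)"
    using G.count_D[OF finI a_nz' m_pos' cop', of "UNIV - {0}"] E_eq by (simp add: ZS_def Vs_def \<phi>_def N_def)
  have KGv: "Q * cv I (UNIV - {0}) (\<phi> V) 0 = G.KF (card V) (n - card V) 0" if V: "V \<in> Vs" for V
  proof -
    have VI: "V \<subseteq> I" using V EI by (auto simp: Vs_def)
    have ev: "V \<inter> I = {} \<or> even (card (UNIV::'a set) - 1)"
    proof (cases "V = {}")
      case False
      then have "E \<noteq> {}" using V by (auto simp: Vs_def)
      then show ?thesis using evN by (simp add: N_def)
    qed simp
    have "Q * cv I (UNIV - {0}) (\<phi> V) 0 = G.KF (card (I \<inter> V)) (card (I - V)) 0"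
      using G.KG[OF finI ev, of 0] by (simp add: Q_def \<phi>_def)
    moreover have "I \<inter> V = V" using VI by auto
    moreover have "card (I - V) = n - card V" using VI finI cardI by (simp add: card_Diff_subset finite_subset)
    ultimately show ?thesis by simp
  qed
  define R where "R = (\<Sum>V\<in>Rs. (\<Prod>j\<in>V. quad_char (a j)) * e ^ (card V div 2) * Q ^ (card V div 2))"
  have QZS: "Q * int (card ZS) = (Q - 1) ^ n - (-1) ^ n + Q * (-1) ^ n + (-1) ^ n * (Q - 1) * R"
  proof -
    have "Q * int (card ZS) = (\<Sum>V\<in>Vs. (\<Prod>j\<in>V. quad_char (a j)) * G.KF (card V) (n - card V) 0)"
      unfolding cZS sum_distrib_left by (rule sum.cong[OF refl]) (simp add: KGv[symmetric] mult_ac)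
    also have "\<dots> = G.KF 0 n 0 + (\<Sum>V\<in>Rs. (\<Prod>j\<in>V. quad_char (a j)) * G.KF (card V) (n - card V) 0)"
      unfolding Rs_def by (subst sum.remove[OF finVs emp]) simp
    also have "(\<Sum>V\<in>Rs. (\<Prod>j\<in>V. quad_char (a j)) * G.KF (card V) (n - card V) 0) = (-1) ^ n * (Q - 1) * R"
      unfolding R_def sum_distrib_left
    proof (rule sum.cong[OF refl])
      fix V assume V: "V \<in> Rs"
      then have VE: "V \<subseteq> E" "even (card V)" "V \<noteq> {}" by (auto simp: Rs_def Vs_def)
      have fV: "finite V" using VE finE finite_subset by blast
      have cpos: "card V > 0" using fV VE by (simp add: card_gt_0_iff)
      have "card V \<le> n" using VE EI finI cardI by (metis card_mono order_trans)
      then have sgn: "(-1::int) ^ (n - card V) = (-1) ^ n"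
        using VE(2) by (metis le_add_diff_inverse2 power_add neg_one_even_power mult_1_right)
      show "(\<Prod>j\<in>V. quad_char (a j)) * G.KF (card V) (n - card V) 0 = (-1) ^ n * (Q - 1) * ((\<Prod>j\<in>V. quad_char (a j)) * e ^ (card V div 2) * Q ^ (card V div 2))"
        using G.KF_even[OF cpos VE(2), of "n - card V"] sgn by (simp add: Q_def e_def mult_ac)
    qed
    finally show ?thesis using G.KF_zero[of n] by (simp add: Q_def)
  qed
  have R_eq: "R = (\<Sum>j=1..(n - t) div 2. quad_char ((-1 :: 'a) ^ j) * esym {t+1..n} (\<lambda>i. quad_char (a i)) (2 * j) * Q ^ j)"
  proof -
    have "R = (\<Sum>j=1..card E div 2. quad_char ((-1::'a) ^ j) * esym E (\<lambda>i. quad_char (a i)) (2 * j) * int (card (UNIV::'a set)) ^ j)"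
      unfolding R_def Rs_def Vs_def e_def Q_def
      by (rule G.R_group[OF finE]) (use evN N_def in simp)
    then show ?thesis using cardE by (simp add: E_def Q_def)
  qed
  define Ex where "Ex = (if I \<in> Rs then (\<Prod>j\<in>I. quad_char (a j)) * cv I (UNIV - {0}) (\<phi> I) 0 else 0)"
  have ZA_eq: "int (card ZA) = Q ^ (n - 1) + Ex"
  proof -
    have "int (card ZA) = (\<Prod>j\<in>{}. quad_char (a j)) * cv I UNIV (\<phi> {}) 0 + (\<Sum>V\<in>Rs. (\<Prod>j\<in>V. quad_char (a j)) * cv I UNIV (\<phi> V) 0)"
      unfolding cZA Rs_def by (subst sum.remove[OF finVs emp]) simp
    also have "cv I UNIV (\<phi> {}) 0 = Q ^ (n - 1)"
      using G.cvF_empty[OF finI In] cardI by (simp add: \<phi>_def Q_def)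
    also have "(\<Sum>V\<in>Rs. (\<Prod>j\<in>V. quad_char (a j)) * cv I UNIV (\<phi> V) 0)
        = (\<Sum>V\<in>Rs. if V = I then (\<Prod>j\<in>V. quad_char (a j)) * cv I (UNIV - {0}) (\<phi> V) 0 else 0)"
    proof (rule sum.cong[OF refl])
      fix V assume V: "V \<in> Rs"
      then have VE: "V \<subseteq> E" "V \<noteq> {}" by (auto simp: Rs_def Vs_def)
      have evN': "even (card (UNIV::'a set) - 1)" using evN VE N_def by auto
      show "(\<Prod>j\<in>V. quad_char (a j)) * cv I UNIV (\<phi> V) 0 = (if V = I then (\<Prod>j\<in>V. quad_char (a j)) * cv I (UNIV - {0}) (\<phi> V) 0 else 0)"
      proof (cases "V = I")
        case True
        have "cv I UNIV (\<phi> V) 0 = cv I (UNIV - {0}) (\<phi> V) 0"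
          using True by (intro cv_GG_UNIV[OF finI]) (simp add: \<phi>_def)
        then show ?thesis using True by simp
      next
        case False
        have "cv I UNIV (\<phi> V) (0::'a) = 0"
          unfolding \<phi>_def by (rule G.cvF_mid[OF finI evN']) (use VE EI False in auto)
        then show ?thesis using False by simp
      qed
    qed
    also have "\<dots> = Ex" unfolding Ex_def using finVs by (simp add: Rs_def sum.delta)
    finally show ?thesis by simp
  qed
  have Ex_eq: "Ex = (if t = 0 \<and> even n
            then quad_char ((-1 :: 'a) ^ (n div 2) * (\<Prod>j=1..n. a j)) * Q ^ ((n - 2) div 2) * (Q - 1)
            else 0)"
  proof (cases "t = 0 \<and> even n")
    case True
    then have EeqI: "E = I" by (auto simp: E_def I_def)
    have IRs: "I \<in> Rs" using True EeqI In cardI by (simp add: Rs_def Vs_def)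
    have evN': "even (card (UNIV::'a set) - 1)" using evN EeqI In N_def by auto
    have "Q * cv I (UNIV - {0}) (\<phi> I) 0 = G.KF n 0 0"
      using KGv[of I] IRs cardI by (simp add: Rs_def)
    also have "\<dots> = e ^ (n div 2) * Q ^ (n div 2) * (Q - 1)"
      using G.KF_even[of n 0] n2 True by (simp add: e_def Q_def)
    finally have cvI: "Q * cv I (UNIV - {0}) (\<phi> I) 0 = e ^ (n div 2) * Q ^ (n div 2) * (Q - 1)" .
    have Qn: "Q ^ (n div 2) = Q * Q ^ ((n - 2) div 2)"
    proof -
      have "n div 2 = Suc ((n - 2) div 2)" using n2 True by (auto elim!: evenE)
      then show ?thesis by simp
    qed
    have qc: "quad_char ((-1 :: 'a) ^ (n div 2) * (\<Prod>j=1..n. a j)) = e ^ (n div 2) * (\<Prod>j\<in>I. quad_char (a j))"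
      using G.qc_mult[OF evN'] G.qc_power[OF evN'] G.qc_prod[OF evN' finI] by (simp add: e_def I_def)
    have "Q * Ex = Q * (quad_char ((-1 :: 'a) ^ (n div 2) * (\<Prod>j=1..n. a j)) * Q ^ ((n - 2) div 2) * (Q - 1))"
      using IRs cvI unfolding Ex_def qc Qn
      by (simp add: mult_ac) (metis (no_types, lifting) mult.left_commute)
    then show ?thesis using True Q2 by simp
  next
    case False
    have nI: "I \<notin> Rs"
    proof
      assume "I \<in> Rs"
      then have "I \<subseteq> E" "even (card I)" by (auto simp: Rs_def Vs_def)
      moreover have "1 \<in> I" using n2 by (simp add: I_def)
      ultimately have "t = 0" "even n" using cardI by (auto simp: E_def)
      then show False using False by simp
    qed
    show ?thesis unfolding Ex_def by (simp only: if_not_P[OF nI] if_not_P[OF False])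
  qed
  have sp1: "int (card T) = int (card ZA) - int (card ZS) + int (card Y)"
    using split_count(1)[OF finI kk_pos' k_pos b_nz, of a m] by (simp add: T_def ZA_def ZS_def X_def Y_def)
  have sp2: "int (card X) = int N ^ n - int (card ZS)"
    using split_count(2)[OF finI kk_pos' k_pos b_nz, of a m] cardI by (simp add: ZS_def X_def N_def)
  have rat: "card X = N * card Y"
  proof -
    have mdvd: "\<forall>j\<in>I. m j dvd M" by (simp add: M_def I_def dvd_Lcm)
    have cop: "gcd ((\<Sum>j\<in>I. int (kk j * M div m j)) - int (k * M)) (int (card (UNIV::'a set)) - 1) = 1"
      using gcd_cond by (simp add: I_def q_def)
    show ?thesis using G.ratio[OF finI mdvd m_pos' b_nz cop, of a]
      by (simp add: X_def Y_def N_def)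
  qed
  have sgn: "(-1::int) ^ (n - 1) = - ((-1) ^ n)"
  proof -
    have "n = Suc (n - 1)" using n2 by simp
    then have "(-1::int) ^ n = - ((-1) ^ (n - 1))" by (metis power_Suc mult_minus1)
    then show ?thesis by simp
  qed
  have Tset: "{x \<in> {1..n} \<rightarrow>\<^sub>E (UNIV :: 'a set). (\<Sum>j=1..n. a j * x j ^ m j) ^ k = b * (\<Prod>j=1..n. x j ^ kk j)} = T"
    by (simp add: T_def I_def)
  define cT where "cT = int (card T)"
  define zA where "zA = int (card ZA)"
  define zS where "zS = int (card ZS)"
  define yy where "yy = int (card Y)"
  have e1: "cT = zA - zS + yy" using sp1 by (simp add: cT_def zA_def zS_def yy_def)
  have e2: "(Q - 1) * yy = (Q - 1) ^ n - zS" using sp2 rat NQ by (simp add: yy_def zS_def)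
  have e3: "Q * zS = (Q - 1) ^ n - (-1) ^ n + Q * (-1) ^ n + (-1) ^ n * (Q - 1) * R" using QZS by (simp add: zS_def)
  have e4: "zA = Q ^ (n - 1) + Ex" using ZA_eq by (simp add: zA_def)
  have "(Q - 1) * cT = (Q - 1) * (Q ^ (n - 1) + (-1) ^ (n - 1) + (-1) ^ (n - 1) * R + Ex)"
  proof -
    have "(Q - 1) * cT = (Q - 1) * zA + (Q - 1) * yy - Q * zS + zS" unfolding e1 by (simp add: algebra_simps)
    also have "\<dots> = (Q - 1) * zA + (Q - 1) ^ n - Q * zS" using e2 by simp
    also have "\<dots> = (Q - 1) * zA - (-1) ^ n * (Q - 1) - (-1) ^ n * (Q - 1) * R"
      using e3 by (simp add: algebra_simps)
    also have "\<dots> = (Q - 1) * (Q ^ (n - 1) + (-1) ^ (n - 1) + (-1) ^ (n - 1) * R + Ex)"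
      using e4 sgn by (simp add: algebra_simps)
    finally show ?thesis .
  qed
  then have "cT = Q ^ (n - 1) + (-1) ^ (n - 1) + (-1) ^ (n - 1) * R + Ex" using Q2 by simp
  then show ?thesis unfolding Tset cT_def[symmetric] R_eq Ex_eq by (simp add: Q_def q_def)
qed


end
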